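(* Let $\mathcal{A}$ be a simplicial hyperplane arrangement in $\mathbb{P}^3(\mathbb{R})$ consisting of $n$ hyperplanes and write $m:=m(\mathcal{A})$. Then $$\sum_{i=3}^m i t^\mathcal{A}_i \geq n + \sum_{i = 2}^{m-1} \frac{i(n-i)}{3(m-i)} h^\mathcal{A}_i .$$
   Context: An arrangement in $\mathbb{P}^3(\mathbb{R})$ is a finite set of projective hyperplanes (images of linear hyperplanes of $\mathbb{R}^4$) with empty common intersection; it induces a cell decomposition of $\mathbb{P}^3$ whose 3-cells are chambers. Each chamber is bounded by at least $4$ hyperplanes (walls); $\mathcal{A}$ is simplicial if each chamber has exactly $4$ walls. Lines are the $2$-dimensional, and vertices the $1$-dimensional, subspaces of $\mathbb{R}^4$ that are intersections of the linear hyperplanes corresponding to $\mathcal{A}$; the weight of a line or vertex is the number of hyperplanes of $\mathcal{A}$ containing it. $h^\mathcal{A}_i$ is the number of lines of weight $i$, $t^\mathcal{A}_j$ ($j\ge 3$) the number of vertices of weight $j$, and $m(\mathcal{A})$ the largest $j$ with $t^\mathcal{A}_j>0$. *)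

theory Defs
  imports "HOL-Analysis.Analysis"
begin

text \<open>A projective hyperplane of P^3(R) is represented by the linear hyperplane
  (3-dimensional linear subspace) of R^4 of which it is the image.\<close>

definition lin_hyperplane :: "(real^4) set \<Rightarrow> bool" where
  "lin_hyperplane H \<longleftrightarrow> subspace H \<and> dim H = 3"

text \<open>An arrangement in P^3(R): finite set of hyperplanes with empty common
  projective intersection, i.e. the linear hyperplanes meet only in 0.\<close>

definition arrangement :: "(real^4) set set \<Rightarrow> bool" where
  "arrangement A \<longleftrightarrow> finite A \<and> A \<noteq> {} \<and> (\<forall>H\<in>A. lin_hyperplane H) \<and> \<Inter>A = {0}"

text \<open>Chambers of the central arrangement in R^4: connected components of the
  complement of the union of the hyperplanes. The chambers of the projective
  arrangement are the images of these (K and -K give the same projective chamber),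
  with the same walls.\<close>

definition chambers :: "(real^4) set set \<Rightarrow> (real^4) set set" where
  "chambers A = {connected_component_set (- \<Union>A) x | x. x \<notin> \<Union>A}"

text \<open>Walls of a chamber: hyperplanes containing a 2-dimensional face (a 3-dimensional
  face of the cone) of the chamber.\<close>

definition walls :: "(real^4) set set \<Rightarrow> (real^4) set \<Rightarrow> (real^4) set set" where
  "walls A K = {H \<in> A. aff_dim (H \<inter> closure K) = 3}"

definition simplicial :: "(real^4) set set \<Rightarrow> bool" where
  "simplicial A \<longleftrightarrow> arrangement A \<and> (\<forall>K\<in>chambers A. card (walls A K) = 4)"

definition flats :: "(real^4) set set \<Rightarrow> (real^4) set set" where
  "flats A = {\<Inter>B | B. B \<subseteq> A \<and> B \<noteq> {}}"

definition lines :: "(real^4) set set \<Rightarrow> (real^4) set set" where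
  "lines A = {X \<in> flats A. dim X = 2}"

definition vertices :: "(real^4) set set \<Rightarrow> (real^4) set set" where
  "vertices A = {X \<in> flats A. dim X = 1}"

definition weight :: "(real^4) set set \<Rightarrow> (real^4) set \<Rightarrow> nat" where
  "weight A X = card {H \<in> A. X \<subseteq> H}"

definition h_num :: "(real^4) set set \<Rightarrow> nat \<Rightarrow> nat" where
  "h_num A i = card {X \<in> lines A. weight A X = i}"

definition t_num :: "(real^4) set set \<Rightarrow> nat \<Rightarrow> nat" where
  "t_num A j = card {X \<in> vertices A. weight A X = j}"

definition m_max :: "(real^4) set set \<Rightarrow> nat" where
  "m_max A = Max {j. 3 \<le> j \<and> t_num A j > 0}"

end

theory Submission
  imports Defs
begin

lemma lin_hyperplane_normal:
  assumes "lin_hyperplane H"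
  shows "\<exists>a. a \<noteq> 0 \<and> H = {x. a \<bullet> x = 0}"
proof -
  have "dim H = DIM(real^4) - 1" "subspace H" using assms unfolding lin_hyperplane_def by auto
  then obtain a where "a \<noteq> 0" "span H = {x. a \<bullet> x = 0}" using lowdim_eq_hyperplane by metis
  then show ?thesis using \<open>subspace H\<close> span_eq_iff by metis
qed

definition nv :: "(real^4) set \<Rightarrow> real^4" where
  "nv H = (SOME a. a \<noteq> 0 \<and> H = {x. a \<bullet> x = 0})"

lemma nv:
  assumes "lin_hyperplane H"
  shows "nv H \<noteq> 0" "H = {x. nv H \<bullet> x = 0}"
  using someI_ex[OF lin_hyperplane_normal[OF assms]] unfolding nv_def by auto

lemma mem_hyp: "lin_hyperplane H \<Longrightarrow> x \<in> H \<longleftrightarrow> nv H \<bullet> x = 0"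
  using nv(2) by blast

lemma hyp_subspace: "lin_hyperplane H \<Longrightarrow> subspace H"
  unfolding lin_hyperplane_def by auto

lemma hyp_dim: "lin_hyperplane H \<Longrightarrow> dim H = 3"
  unfolding lin_hyperplane_def by auto

lemma dim_int_ge:
  fixes S T :: "(real^4) set"
  assumes "subspace S" "subspace T"
  shows "dim S + dim T \<le> dim (S \<inter> T) + 4"
proof -
  have "dim {x + y |x y. x \<in> S \<and> y \<in> T} \<le> 4"
    using dim_subset_UNIV[where ?'a="real^4"] by simp
  then show ?thesis using dim_sums_Int[OF assms] by linarith
qed

lemma dim_int_ge_in:
  fixes S T U :: "(real^4) set"
  assumes "subspace S" "subspace T" "subspace U" "S \<subseteq> U" "T \<subseteq> U"
  shows "dim S + dim T \<le> dim (S \<inter> T) + dim U"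
proof -
  have "{x + y |x y. x \<in> S \<and> y \<in> T} \<subseteq> U"
    using assms by (auto intro: subspace_add)
  then have "dim {x + y |x y. x \<in> S \<and> y \<in> T} \<le> dim U"
    by (rule dim_subset)
  then show ?thesis using dim_sums_Int[OF assms(1,2)] by linarith
qed

lemma dim_psub:
  fixes S T :: "(real^4) set"
  assumes "subspace S" "subspace T" "S \<subseteq> T" "S \<noteq> T"
  shows "dim S < dim T"
  using subspace_dim_equal[OF assms(1,2,3)] dim_subset[OF assms(3)] assms(4) by linarith

lemma dim_le1_span:
  fixes Z :: "(real^4) set"
  assumes "subspace Z" "dim Z \<le> 1" "x \<in> Z" "x \<noteq> 0"
  shows "Z = span {x}"
proof -
  have "span {x} \<subseteq> Z" using assms span_minimal by (metis empty_subsetI insert_subset)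
  moreover have "dim (span {x}) = 1" using assms(4) by (simp add: dim_span dim_insert)
  ultimately show ?thesis using subspace_dim_equal[of "span {x}" Z] assms subspace_span by force
qed

lemma dim_span1: "(x::real^4) \<noteq> 0 \<Longrightarrow> dim (span {x}) = 1"
  by (simp add: dim_span dim_insert)

lemma dim_ge1_ex:
  fixes Z :: "(real^4) set"
  assumes "dim Z \<ge> 1"
  shows "\<exists>x\<in>Z. x \<noteq> 0"
proof (rule ccontr)
  assume "\<not> ?thesis"
  then have "Z \<subseteq> {0}" by auto
  then have "dim Z = 0" by simp
  then show False using assms by linarith
qed

lemma hyp_int_dim:
  assumes "lin_hyperplane H" "lin_hyperplane H'" "H \<noteq> H'"
  shows "dim (H \<inter> H') = 2"
proof -
  have s: "subspace H" "subspace H'" using assms hyp_subspace by auto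
  have "H \<inter> H' \<noteq> H"
  proof
    assume "H \<inter> H' = H"
    then have "H \<subseteq> H'" by auto
    then show False using subspace_dim_equal[OF s(1,2)] assms hyp_dim by force
  qed
  then have "dim (H \<inter> H') < 3" using dim_psub[of "H \<inter> H'" H] s assms hyp_dim
    by (simp add: subspace_inter)
  moreover have "dim (H \<inter> H') \<ge> 2" using dim_int_ge[OF s] assms hyp_dim by simp
  ultimately show ?thesis by simp
qed

lemma subspace_not_sub_dim:
  fixes P T :: "(real^4) set"
  assumes "subspace P" "subspace T" "\<not> P \<subseteq> T"
  shows "dim (P \<inter> T) < dim P"
  using dim_psub[of "P \<inter> T" P] assms by (auto simp: subspace_inter)

definition sv :: "(real^4) set set \<Rightarrow> real^4 \<Rightarrow> (real^4) set \<Rightarrow> real" where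
  "sv B x = (\<lambda>H. if H \<in> B then sgn (nv H \<bullet> x) else 0)"

definition reg :: "(real^4) set \<Rightarrow> (real^4) set set \<Rightarrow> ((real^4) set \<Rightarrow> real) set" where
  "reg S B = sv B ` (S - \<Union>B)"

definition hyps :: "(real^4) set set \<Rightarrow> bool" where
  "hyps B \<longleftrightarrow> finite B \<and> (\<forall>H\<in>B. lin_hyperplane H)"

lemma finite_reg:
  assumes "finite B"
  shows "finite (reg S B)"
proof -
  have "reg S B \<subseteq> (\<lambda>g H. if H \<in> B then g H else 0) ` (PiE B (\<lambda>_. {-1,0,1::real}))"
  proof
    fix f assume "f \<in> reg S B"
    then obtain x where f: "f = sv B x" unfolding reg_def by auto
    show "f \<in> (\<lambda>g H. if H \<in> B then g H else 0) ` (PiE B (\<lambda>_. {-1,0,1::real}))"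
      apply (rule image_eqI[where x="restrict f B"])
      unfolding f sv_def by (auto simp: sgn_if)
  qed
  moreover have "finite (PiE B (\<lambda>_. {-1,0,1::real}))" using assms by (simp add: finite_PiE)
  ultimately show ?thesis by (meson finite_imageI finite_subset)
qed

lemma sgn_add_small:
  fixes a b :: real
  assumes "\<bar>b\<bar> < \<bar>a\<bar>"
  shows "sgn (a + b) = sgn a"
  using assms by (auto simp: sgn_if)

lemma perturb:
  assumes "finite B" "\<forall>H\<in>B. nv H \<bullet> x \<noteq> 0"
  shows "\<exists>e>0. \<forall>t. \<bar>t\<bar> \<le> e \<longrightarrow> (\<forall>H\<in>B. sgn (nv H \<bullet> (x + t *\<^sub>R d)) = sgn (nv H \<bullet> x))"
  using assms
proof (induction B rule: finite_induct)
  case empty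
  then show ?case by (auto intro: exI[of _ 1])
next
  case (insert H B)
  then obtain e where e: "e > 0" "\<forall>t. \<bar>t\<bar> \<le> e \<longrightarrow> (\<forall>H\<in>B. sgn (nv H \<bullet> (x + t *\<^sub>R d)) = sgn (nv H \<bullet> x))"
    by auto
  define a where "a = nv H \<bullet> x"
  define b where "b = nv H \<bullet> d"
  have a0: "a \<noteq> 0" using insert unfolding a_def by auto
  define e' where "e' = min e (\<bar>a\<bar> / (2 * (\<bar>b\<bar> + 1)))"
  have e'0: "e' > 0" using e a0 unfolding e'_def by (auto simp: field_simps)
  have "sgn (nv H \<bullet> (x + t *\<^sub>R d)) = sgn (nv H \<bullet> x)" if "\<bar>t\<bar> \<le> e'" for t
  proof -
    have "\<bar>t\<bar> \<le> \<bar>a\<bar> / (2 * (\<bar>b\<bar> + 1))" using that unfolding e'_def by auto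
    then have "\<bar>t\<bar> * (2 * (\<bar>b\<bar> + 1)) \<le> \<bar>a\<bar>" by (simp add: field_simps)
    moreover have "\<bar>t * b\<bar> \<le> \<bar>t\<bar> * (\<bar>b\<bar> + 1)" by (simp add: abs_mult mult_left_mono)
    moreover have "\<bar>t\<bar> * (\<bar>b\<bar> + 1) \<ge> 0" by simp
    ultimately have "\<bar>t * b\<bar> < \<bar>a\<bar>" using a0 by linarith
    then have "sgn (a + t * b) = sgn a" by (rule sgn_add_small)
    then show ?thesis unfolding a_def b_def by (simp add: inner_add_right)
  qed
  moreover have "e' \<le> e" unfolding e'_def by simp
  ultimately show ?case using e e'0 by (intro exI[of _ e']) auto
qed

lemma sv_insert:
  assumes "H0 \<notin> B"
  shows "sv (insert H0 B) x = (sv B x)(H0 := sgn (nv H0 \<bullet> x))"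
  using assms unfolding sv_def by auto

lemma sv_upd0:
  assumes "H0 \<notin> B"
  shows "(sv (insert H0 B) x)(H0 := 0) = sv B x"
  using assms unfolding sv_def by auto

lemma card_fibers:
  assumes "finite A" "finite R" "f ` A \<subseteq> R"
  shows "card A = (\<Sum>b\<in>R. card {a\<in>A. f a = b})"
proof -
  have "A = (\<Union>b\<in>R. {a\<in>A. f a = b})" using assms by auto
  then have "card A = card (\<Union>b\<in>R. {a\<in>A. f a = b})" by (rule arg_cong[where f=card])
  also have "\<dots> = (\<Sum>b\<in>R. card {a\<in>A. f a = b})"
    by (rule card_UN_disjoint) (use assms in auto)
  finally show ?thesis .
qed

lemma reg_mono_sub:
  assumes "S' \<subseteq> S"
  shows "reg S' B \<subseteq> reg S B"
  using assms unfolding reg_def by auto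

lemma sum_1_if: "finite R \<Longrightarrow> R0 \<subseteq> R \<Longrightarrow> (\<Sum>\<sigma>\<in>R. 1 + (if \<sigma> \<in> R0 then 1 else (0::nat))) = card R + card R0"
proof -
  assume a: "finite R" "R0 \<subseteq> R"
  have "(\<Sum>\<sigma>\<in>R. (if \<sigma> \<in> R0 then 1 else (0::nat))) = card (R \<inter> R0)"
    using a(1) by (simp add: sum.If_cases Int_def)
  moreover have "(\<Sum>\<sigma>\<in>R. 1 + (if \<sigma> \<in> R0 then 1 else (0::nat))) = card R + (\<Sum>\<sigma>\<in>R. (if \<sigma> \<in> R0 then 1 else (0::nat)))"
    by (subst sum.distrib) simp
  ultimately show ?thesis using a by (simp add: Int_absorb1)
qed

lemma DR_lower:
  assumes "hyps B" "lin_hyperplane H0" "H0 \<notin> B" "subspace S" "\<not> S \<subseteq> H0"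
  shows "card (reg S (insert H0 B)) \<ge> card (reg S B) + card (reg (S \<inter> H0) B)"
proof -
  let ?Ra = "reg S (insert H0 B)" and ?Rb = "reg S B" and ?Rc = "reg (S \<inter> H0) B"
  let ?p = "\<lambda>\<tau>. \<tau>(H0 := 0)"
  have fB: "finite B" using assms(1) hyps_def by auto
  have fin': "finite ?Ra" using fB finite_reg by simp
  have fin: "finite ?Rb" using fB finite_reg by simp
  have R0R: "?Rc \<subseteq> ?Rb" by (rule reg_mono_sub) auto
  have img: "?p ` ?Ra \<subseteq> ?Rb"
  proof
    fix s assume "s \<in> ?p ` ?Ra"
    then obtain x where x: "x \<in> S - \<Union>(insert H0 B)" "s = ?p (sv (insert H0 B) x)"
      unfolding reg_def by auto
    then show "s \<in> ?Rb" unfolding reg_def using sv_upd0[OF assms(3)] by auto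
  qed
  obtain d where d: "d \<in> S" "d \<notin> H0" using assms(5) by auto
  have nd: "nv H0 \<bullet> d \<noteq> 0" using d mem_hyp[OF assms(2)] by auto
  have fib: "card {\<tau>\<in>?Ra. ?p \<tau> = \<sigma>} \<ge> 1 + (if \<sigma> \<in> ?Rc then 1 else 0)" if "\<sigma> \<in> ?Rb" for \<sigma>
  proof (cases "\<sigma> \<in> ?Rc")
    case True
    then obtain x where x: "x \<in> S" "x \<in> H0" "x \<notin> \<Union>B" "\<sigma> = sv B x" unfolding reg_def by auto
    have nz: "\<forall>H\<in>B. nv H \<bullet> x \<noteq> 0" using x(3) assms(1) mem_hyp unfolding hyps_def by auto
    obtain e where e: "e > 0" "\<And>t. \<bar>t\<bar> \<le> e \<Longrightarrow> (\<forall>H\<in>B. sgn (nv H \<bullet> (x + t *\<^sub>R d)) = sgn (nv H \<bullet> x))"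
      using perturb[OF fB nz] by blast
    have x0: "nv H0 \<bullet> x = 0" using x(2) mem_hyp[OF assms(2)] by auto
    have inR: "sv (insert H0 B) (x + t *\<^sub>R d) \<in> ?Ra" and pr: "?p (sv (insert H0 B) (x + t *\<^sub>R d)) = \<sigma>"
      and val: "sv (insert H0 B) (x + t *\<^sub>R d) H0 = sgn t * sgn (nv H0 \<bullet> d)"
      if "\<bar>t\<bar> \<le> e" "t \<noteq> 0" for t
    proof -
      have s: "\<forall>H\<in>B. sgn (nv H \<bullet> (x + t *\<^sub>R d)) = sgn (nv H \<bullet> x)" using e(2) that by auto
      have "x + t *\<^sub>R d \<in> S" using x d assms(4) by (simp add: subspace_add subspace_scale)
      moreover have "x + t *\<^sub>R d \<notin> H0" using mem_hyp[OF assms(2)] x0 nd that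
        by (simp add: inner_add_right)
      moreover have "x + t *\<^sub>R d \<notin> H" if "H \<in> B" for H
      proof
        assume "x + t *\<^sub>R d \<in> H"
        then have "nv H \<bullet> (x + t *\<^sub>R d) = 0" using that assms(1) mem_hyp hyps_def by blast
        then have "sgn (nv H \<bullet> (x + t *\<^sub>R d)) = 0" by simp
        then have "sgn (nv H \<bullet> x) = 0" using s that by metis
        then show False using that nz by (simp add: sgn_zero_iff)
      qed
      ultimately show "sv (insert H0 B) (x + t *\<^sub>R d) \<in> ?Ra" unfolding reg_def by auto
      show "?p (sv (insert H0 B) (x + t *\<^sub>R d)) = \<sigma>"
        unfolding x(4) sv_def using s assms(3) by (auto simp: fun_eq_iff)
      show "sv (insert H0 B) (x + t *\<^sub>R d) H0 = sgn t * sgn (nv H0 \<bullet> d)"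
        unfolding sv_def using x0 by (simp add: inner_add_right sgn_mult)
    qed
    have "{sv (insert H0 B) (x + e *\<^sub>R d), sv (insert H0 B) (x + (-e) *\<^sub>R d)} \<subseteq> {\<tau>\<in>?Ra. ?p \<tau> = \<sigma>}"
      using inR[of e] pr[of e] inR[of "-e"] pr[of "-e"] e(1) by auto
    moreover have "sv (insert H0 B) (x + e *\<^sub>R d) \<noteq> sv (insert H0 B) (x + (-e) *\<^sub>R d)"
    proof
      assume "sv (insert H0 B) (x + e *\<^sub>R d) = sv (insert H0 B) (x + (-e) *\<^sub>R d)"
      then have "sgn e * sgn (nv H0 \<bullet> d) = sgn (-e) * sgn (nv H0 \<bullet> d)"
        using val[of e] val[of "-e"] e(1) by auto
      then have "sgn (nv H0 \<bullet> d) = - sgn (nv H0 \<bullet> d)" using e(1) by simp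
      then have "sgn (nv H0 \<bullet> d) = 0" by linarith
      then show False using nd by (simp add: sgn_zero_iff)
    qed
    moreover have "finite {\<tau>\<in>?Ra. ?p \<tau> = \<sigma>}" using fin' by auto
    ultimately have "card {\<tau>\<in>?Ra. ?p \<tau> = \<sigma>} \<ge> card {sv (insert H0 B) (x + e *\<^sub>R d), sv (insert H0 B) (x + (-e) *\<^sub>R d)}"
      by (intro card_mono) auto
    moreover have "card {sv (insert H0 B) (x + e *\<^sub>R d), sv (insert H0 B) (x + (-e) *\<^sub>R d)} = 2"
      using \<open>sv (insert H0 B) (x + e *\<^sub>R d) \<noteq> sv (insert H0 B) (x + (-e) *\<^sub>R d)\<close> by simp
    ultimately have "card {\<tau>\<in>?Ra. ?p \<tau> = \<sigma>} \<ge> 2" by simp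
    then show ?thesis using True by simp
  next
    case False
    from that obtain x where x: "x \<in> S" "x \<notin> \<Union>B" "\<sigma> = sv B x" unfolding reg_def by auto
    have "x \<notin> H0"
    proof
      assume "x \<in> H0"
      then have "\<sigma> \<in> ?Rc" using x unfolding reg_def by blast
      with False show False by blast
    qed
    then have "x \<in> S - \<Union>(insert H0 B)" using x by blast
    then have "sv (insert H0 B) x \<in> ?Ra" unfolding reg_def by blast
    moreover have "?p (sv (insert H0 B) x) = \<sigma>" using sv_upd0[OF assms(3)] x(3) by simp
    ultimately have "{\<tau>\<in>?Ra. ?p \<tau> = \<sigma>} \<noteq> {}" by blast
    moreover have "finite {\<tau>\<in>?Ra. ?p \<tau> = \<sigma>}" using fin' by auto
    ultimately have "card {\<tau>\<in>?Ra. ?p \<tau> = \<sigma>} > 0"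
      by (simp only: card_gt_0_iff) blast
    then show ?thesis using False by simp
  qed
  have "card ?Ra = (\<Sum>\<sigma>\<in>?Rb. card {\<tau>\<in>?Ra. ?p \<tau> = \<sigma>})"
    by (rule card_fibers[OF fin' fin img])
  also have "\<dots> \<ge> (\<Sum>\<sigma>\<in>?Rb. 1 + (if \<sigma> \<in> ?Rc then 1 else 0))"
    by (rule sum_mono) (use fib in auto)
  finally have "card ?Ra \<ge> (\<Sum>\<sigma>\<in>?Rb. 1 + (if \<sigma> \<in> ?Rc then 1 else 0))" .
  moreover have "(\<Sum>\<sigma>\<in>?Rb. 1 + (if \<sigma> \<in> ?Rc then 1 else (0::nat))) = card ?Rb + card ?Rc"
    using R0R fin by (rule sum_1_if[rotated])
  ultimately show ?thesis by simp
qed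

lemma sgn_pos_comb:
  fixes p q a b :: real
  assumes "a > 0" "b > 0" "sgn p = sgn q" "p \<noteq> 0"
  shows "sgn (a * p + b * q) = sgn p"
proof (cases "p > 0")
  case True
  then have "q > 0" using assms by (metis sgn_greater)
  have "a * p > 0" "b * q > 0" using True \<open>q > 0\<close> assms by auto
  then show ?thesis using True by (simp add: sgn_if)
next
  case False
  then have "p < 0" using assms by simp
  then have "q < 0" using assms by (metis sgn_less)
  have "a * p < 0" "b * q < 0" using \<open>p < 0\<close> \<open>q < 0\<close> assms by (auto simp: mult_pos_neg)
  then show ?thesis using \<open>p < 0\<close> by (simp add: sgn_if)
qed

lemma hyps_insert: "hyps (insert H B) \<longleftrightarrow> lin_hyperplane H \<and> hyps B"
  unfolding hyps_def by auto

lemma hyps_subset: "hyps B \<Longrightarrow> B' \<subseteq> B \<Longrightarrow> hyps B'"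
  unfolding hyps_def by (auto intro: finite_subset)

lemma zero_in_hyp: "lin_hyperplane H \<Longrightarrow> 0 \<in> H"
  using hyp_subspace subspace_0 by blast

lemma DR_upper:
  assumes "hyps B" "lin_hyperplane H0" "H0 \<notin> B" "subspace S"
  shows "card (reg S (insert H0 B)) \<le> card (reg S B) + card (reg (S \<inter> H0) B)"
proof -
  let ?Ra = "reg S (insert H0 B)" and ?Rb = "reg S B" and ?Rc = "reg (S \<inter> H0) B"
  let ?p = "\<lambda>\<tau>. \<tau>(H0 := 0)"
  have fB: "finite B" using assms(1) hyps_def by auto
  have fin': "finite ?Ra" using fB finite_reg by simp
  have fin: "finite ?Rb" using fB finite_reg by simp
  have R0R: "?Rc \<subseteq> ?Rb" by (rule reg_mono_sub) auto
  have img: "?p ` ?Ra \<subseteq> ?Rb"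
  proof
    fix s assume "s \<in> ?p ` ?Ra"
    then obtain x where x: "x \<in> S - \<Union>(insert H0 B)" "s = ?p (sv (insert H0 B) x)"
      unfolding reg_def by auto
    then show "s \<in> ?Rb" unfolding reg_def using sv_upd0[OF assms(3)] by auto
  qed
  have fib: "card {\<tau>\<in>?Ra. ?p \<tau> = \<sigma>} \<le> 1 + (if \<sigma> \<in> ?Rc then 1 else 0)" if "\<sigma> \<in> ?Rb" for \<sigma>
  proof -
    have sub: "{\<tau>\<in>?Ra. ?p \<tau> = \<sigma>} \<subseteq> {\<sigma>(H0 := 1), \<sigma>(H0 := -1)}"
    proof
      fix \<tau> assume t: "\<tau> \<in> {\<tau>\<in>?Ra. ?p \<tau> = \<sigma>}"
      then obtain x where x: "x \<in> S - \<Union>(insert H0 B)" "\<tau> = sv (insert H0 B) x"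
        unfolding reg_def by auto
      have "nv H0 \<bullet> x \<noteq> 0" using x(1) mem_hyp[OF assms(2)] by auto
      then have t01: "\<tau> H0 = 1 \<or> \<tau> H0 = -1" using x(2) unfolding sv_def by (auto simp: sgn_if)
      have tH: "\<tau> H = \<sigma> H" if "H \<noteq> H0" for H
      proof -
        have "?p \<tau> = \<sigma>" using t by simp
        then have "(?p \<tau>) H = \<sigma> H" by simp
        then show ?thesis using that by simp
      qed
      have "\<tau> = \<sigma>(H0 := \<tau> H0)"
      proof (rule ext)
        fix H show "\<tau> H = (\<sigma>(H0 := \<tau> H0)) H" by (cases "H = H0") (auto simp: tH)
      qed
      then show "\<tau> \<in> {\<sigma>(H0 := 1), \<sigma>(H0 := -1)}" using t01 by (metis insertCI)
    qed
    show ?thesis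
    proof (cases "\<sigma> \<in> ?Rc")
      case True
      have "card {\<tau>\<in>?Ra. ?p \<tau> = \<sigma>} \<le> card {\<sigma>(H0 := 1), \<sigma>(H0 := -1)}"
        by (rule card_mono[OF _ sub]) simp
      also have "\<dots> \<le> 2" by (rule card_insert_le_m1) auto
      finally show ?thesis using True by simp
    next
      case False
      have "\<tau>1 = \<tau>2" if t1: "\<tau>1 \<in> {\<tau>\<in>?Ra. ?p \<tau> = \<sigma>}" and t2: "\<tau>2 \<in> {\<tau>\<in>?Ra. ?p \<tau> = \<sigma>}" for \<tau>1 \<tau>2
      proof (rule ccontr)
        assume ne: "\<tau>1 \<noteq> \<tau>2"
        obtain x where x: "x \<in> S - \<Union>(insert H0 B)" "\<tau>1 = sv (insert H0 B) x"
          using t1 unfolding reg_def by auto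
        obtain y where y: "y \<in> S - \<Union>(insert H0 B)" "\<tau>2 = sv (insert H0 B) y"
          using t2 unfolding reg_def by auto
        have px: "sv B x = \<sigma>" using t1 x sv_upd0[OF assms(3)] by auto
        have py: "sv B y = \<sigma>" using t2 y sv_upd0[OF assms(3)] by auto
        define a where "a = nv H0 \<bullet> x"
        define b where "b = nv H0 \<bullet> y"
        have a0: "a \<noteq> 0" using x(1) mem_hyp[OF assms(2)] a_def by auto
        have b0: "b \<noteq> 0" using y(1) mem_hyp[OF assms(2)] b_def by auto
        have "sgn a \<noteq> sgn b"
        proof
          assume "sgn a = sgn b"
          then have "sv (insert H0 B) x = sv (insert H0 B) y"
            using px py by (simp add: sv_insert[OF assms(3)] flip: a_def b_def)
          then show False using ne x y by simp
        qed
        have ab: "\<bar>b\<bar> * a + \<bar>a\<bar> * b = 0"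
        proof (cases "a > 0")
          case True
          have "\<not> b > 0"
          proof
            assume "b > 0"
            then show False using True \<open>sgn a \<noteq> sgn b\<close> by simp
          qed
          then have "b < 0" using b0 by linarith
          then show ?thesis using True by simp
        next
          case False
          then have "a < 0" using a0 by simp
          have "\<not> b < 0"
          proof
            assume "b < 0"
            then show False using \<open>a < 0\<close> \<open>sgn a \<noteq> sgn b\<close> by simp
          qed
          then have "b > 0" using b0 by linarith
          then show ?thesis using \<open>a < 0\<close> by simp
        qed
        define z where "z = \<bar>b\<bar> *\<^sub>R x + \<bar>a\<bar> *\<^sub>R y"
        have "x \<in> S" "y \<in> S" using x y by auto
        then have zS: "z \<in> S" unfolding z_def using assms(4)
          by (simp add: subspace_add subspace_scale)
        have zH0: "z \<in> H0" using ab mem_hyp[OF assms(2)] unfolding z_def a_def b_def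
          by (simp add: inner_add_right)
        have sz: "sgn (nv H \<bullet> z) = sgn (nv H \<bullet> x)" if "H \<in> B" for H
        proof -
          have "sv B x H = sv B y H" using px py by simp
          then have "sgn (nv H \<bullet> x) = sgn (nv H \<bullet> y)" using that unfolding sv_def by simp
          moreover have "nv H \<bullet> x \<noteq> 0" using x(1) that assms(1) mem_hyp unfolding hyps_def by auto
          ultimately show ?thesis unfolding z_def using sgn_pos_comb[of "\<bar>b\<bar>" "\<bar>a\<bar>"] a0 b0
            by (simp add: inner_add_right)
        qed
        have "z \<notin> \<Union>B"
        proof
          assume "z \<in> \<Union>B"
          then obtain H where H: "H \<in> B" "z \<in> H" by auto
          then have "nv H \<bullet> z = 0" using assms(1) mem_hyp unfolding hyps_def by auto
          then have "sgn (nv H \<bullet> x) = 0" using sz[OF H(1)] by simp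
          moreover have "nv H \<bullet> x \<noteq> 0" using x(1) H(1) assms(1) mem_hyp unfolding hyps_def by auto
          ultimately show False by (simp add: sgn_zero_iff)
        qed
        moreover have "sv B z = \<sigma>"
        proof (rule ext)
          fix H show "sv B z H = \<sigma> H"
            using sz[of H] px[symmetric] unfolding sv_def by (cases "H \<in> B") simp_all
        qed
        ultimately have "\<sigma> \<in> ?Rc" using zS zH0 unfolding reg_def by blast
        then show False using False by blast
      qed
      then have "card {\<tau>\<in>?Ra. ?p \<tau> = \<sigma>} \<le> Suc 0"
        using fin' by (subst card_le_Suc0_iff_eq) auto
      then show ?thesis using False by simp
    qed
  qed
  have "card ?Ra = (\<Sum>\<sigma>\<in>?Rb. card {\<tau>\<in>?Ra. ?p \<tau> = \<sigma>})"
    by (rule card_fibers[OF fin' fin img])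
  also have "\<dots> \<le> (\<Sum>\<sigma>\<in>?Rb. 1 + (if \<sigma> \<in> ?Rc then 1 else 0))"
    by (rule sum_mono) (use fib in auto)
  also have "\<dots> = card ?Rb + card ?Rc"
    using R0R fin by (rule sum_1_if[rotated])
  finally show ?thesis .
qed

lemma reg_empty_le: "card (reg S {}) \<le> 1"
proof -
  have "reg S {} \<subseteq> {\<lambda>_. 0}" unfolding reg_def sv_def by auto
  then have "card (reg S {}) \<le> card {\<lambda>_::(real^4) set. 0::real}" by (rule card_mono[rotated]) simp
  then show ?thesis by simp
qed

lemma reg_empty_ge: "0 \<in> S \<Longrightarrow> card (reg S {}) \<ge> 1"
proof -
  assume "0 \<in> S"
  then have "reg S {} \<noteq> {}" unfolding reg_def by auto
  moreover have "finite (reg S {})" by (rule finite_reg) simp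
  ultimately show ?thesis by (simp add: Suc_leI card_gt_0_iff)
qed

lemma reg_two:
  assumes "hyps B" "B \<noteq> {}" "subspace S" "x \<in> S" "x \<notin> \<Union>B"
  shows "card (reg S B) \<ge> 2"
proof -
  obtain H where H: "H \<in> B" using assms(2) by auto
  have nz: "nv H \<bullet> x \<noteq> 0" using assms(1,5) H mem_hyp unfolding hyps_def by auto
  have mx: "-x \<in> S" using assms(3,4) by (simp add: subspace_neg)
  have "-x \<notin> \<Union>B"
  proof
    assume "-x \<in> \<Union>B"
    then obtain H' where "H' \<in> B" "-x \<in> H'" by auto
    then have "x \<in> H'" using assms(1) hyp_subspace unfolding hyps_def
      by (metis minus_minus subspace_neg)
    then show False using assms(5) \<open>H' \<in> B\<close> by auto
  qed
  then have in2: "{sv B x, sv B (-x)} \<subseteq> reg S B" using assms mx unfolding reg_def by auto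
  have "sv B x \<noteq> sv B (-x)"
  proof
    assume "sv B x = sv B (-x)"
    then have "sgn (nv H \<bullet> x) = sgn (nv H \<bullet> (-x))" using H unfolding sv_def by metis
    then have "sgn (nv H \<bullet> x) = - sgn (nv H \<bullet> x)" by simp
    then have "sgn (nv H \<bullet> x) = 0" by linarith
    then show False using nz by (simp add: sgn_zero_iff)
  qed
  then have "card {sv B x, sv B (-x)} = 2" by simp
  moreover have "card {sv B x, sv B (-x)} \<le> card (reg S B)"
    by (rule card_mono[OF finite_reg in2]) (use assms(1) hyps_def in auto)
  ultimately show ?thesis by simp
qed

lemma int_dim_le1:
  fixes P T :: "(real^4) set"
  assumes "subspace P" "dim P = 2" "subspace T" "\<not> P \<subseteq> T" "x \<in> P \<inter> T" "x \<noteq> 0"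
  shows "P \<inter> T = span {x}"
  using subspace_not_sub_dim[OF assms(1,3,4)] assms dim_le1_span[of "P \<inter> T" x]
  by (simp add: subspace_inter)

lemma L2D:
  assumes "hyps B" "subspace P" "dim P = 2" "\<forall>H\<in>B. \<not> P \<subseteq> H"
  shows "card (reg P B) \<ge> 2 * card ((\<lambda>H. P \<inter> H) ` B)"
proof -
  have "finite B" using assms(1) hyps_def by auto
  then show ?thesis using assms
  proof (induction B rule: finite_induct)
    case empty
    then show ?case by simp
  next
    case (insert H0 B)
    have hB: "hyps B" and h0: "lin_hyperplane H0" using insert.prems hyps_insert by auto
    have nsub: "\<not> P \<subseteq> H0" using insert.prems by auto
    have IH: "card (reg P B) \<ge> 2 * card ((\<lambda>H. P \<inter> H) ` B)"
      using insert.IH hB insert.prems by auto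
    have DR: "card (reg P (insert H0 B)) \<ge> card (reg P B) + card (reg (P \<inter> H0) B)"
      by (rule DR_lower[OF hB h0 insert.hyps(2) assms(2) nsub])
    show ?case
    proof (cases "P \<inter> H0 \<in> (\<lambda>H. P \<inter> H) ` B")
      case True
      then have "(\<lambda>H. P \<inter> H) ` insert H0 B = (\<lambda>H. P \<inter> H) ` B" by auto
      then show ?thesis using IH DR by simp
    next
      case False
      then have ci: "card ((\<lambda>H. P \<inter> H) ` insert H0 B) = card ((\<lambda>H. P \<inter> H) ` B) + 1"
        using insert.hyps(1) by simp
      have "card (reg (P \<inter> H0) B) \<ge> 2 \<or> (B = {} \<and> card (reg (P \<inter> H0) B) \<ge> 1)"
      proof (cases "B = {}")
        case True
        then show ?thesis using reg_empty_ge[of "P \<inter> H0"] assms(2) zero_in_hyp[OF h0]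
          by (simp add: subspace_0)
      next
        case ne: False
        have sP0: "subspace (P \<inter> H0)" using assms(2) hyp_subspace[OF h0] by (simp add: subspace_inter)
        have "dim P + dim H0 \<le> dim (P \<inter> H0) + 4"
          by (rule dim_int_ge[OF assms(2) hyp_subspace[OF h0]])
        then have "dim (P \<inter> H0) \<ge> 1" using assms(3) hyp_dim[OF h0] by simp
        then obtain x where x: "x \<in> P \<inter> H0" "x \<noteq> 0" using dim_ge1_ex by blast
        have "x \<notin> \<Union>B"
        proof
          assume "x \<in> \<Union>B"
          then obtain H where H: "H \<in> B" "x \<in> H" by auto
          have hH: "lin_hyperplane H" using H hB hyps_def by auto
          have "P \<inter> H = span {x}"
            using int_dim_le1[OF assms(2,3) hyp_subspace[OF hH]] insert.prems(4) H x by auto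
          moreover have "P \<inter> H0 = span {x}"
            using int_dim_le1[OF assms(2,3) hyp_subspace[OF h0] nsub] x by auto
          ultimately show False using False H by auto
        qed
        then show ?thesis using reg_two[OF hB ne sP0] x by auto
      qed
      moreover have "B = {} \<Longrightarrow> card (reg P B) \<ge> 1"
        using reg_empty_ge[of P] assms(2) by (simp add: subspace_0)
      ultimately show ?thesis using IH DR ci by auto
    qed
  qed
qed

definition LL :: "(real^4) set \<Rightarrow> (real^4) set set \<Rightarrow> (real^4) set set" where
  "LL H B = (\<lambda>H'. H \<inter> H') ` B"

definition UU :: "(real^4) set \<Rightarrow> (real^4) set set \<Rightarrow> (real^4) set set" where
  "UU H B = {X \<inter> Y | X Y. X \<in> LL H B \<and> Y \<in> LL H B \<and> X \<noteq> Y}"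

definition rr :: "(real^4) set \<Rightarrow> (real^4) set set \<Rightarrow> (real^4) set \<Rightarrow> nat" where
  "rr H B v = card {X \<in> LL H B. v \<subseteq> X}"

definition setting :: "(real^4) set \<Rightarrow> (real^4) set set \<Rightarrow> bool" where
  "setting H B \<longleftrightarrow> lin_hyperplane H \<and> hyps B \<and> H \<notin> B"

lemma LL_dim:
  assumes "setting H B" "X \<in> LL H B"
  shows "subspace X" "dim X = 2" "X \<subseteq> H"
proof -
  obtain H' where H': "H' \<in> B" "X = H \<inter> H'" using assms(2) unfolding LL_def by auto
  have h: "lin_hyperplane H" "lin_hyperplane H'" "H \<noteq> H'"
    using assms(1) H' unfolding setting_def hyps_def by auto
  show "subspace X" using H' h hyp_subspace by (simp add: subspace_inter)
  show "dim X = 2" using H' hyp_int_dim[OF h] by simp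
  show "X \<subseteq> H" using H' by auto
qed

lemma LL_neq_not_sub:
  assumes "setting H B" "X \<in> LL H B" "Y \<in> LL H B" "X \<noteq> Y"
  shows "\<not> X \<subseteq> Y"
  using subspace_dim_equal[of X Y] LL_dim[OF assms(1,2)] LL_dim[OF assms(1,3)] assms(4) by auto

lemma UU_dim:
  assumes "setting H B" "X \<in> LL H B" "Y \<in> LL H B" "X \<noteq> Y"
  shows "subspace (X \<inter> Y)" "dim (X \<inter> Y) = 1"
proof -
  note x = LL_dim[OF assms(1,2)] and y = LL_dim[OF assms(1,3)]
  show "subspace (X \<inter> Y)" using x y by (simp add: subspace_inter)
  have "dim (X \<inter> Y) < 2" using subspace_not_sub_dim[OF x(1) y(1) LL_neq_not_sub[OF assms]] x by simp
  moreover have "dim X + dim Y \<le> dim (X \<inter> Y) + dim H"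
    by (rule dim_int_ge_in) (use x y assms(1) hyp_subspace in \<open>auto simp: setting_def\<close>)
  moreover have "dim H = 3" using assms(1) hyp_dim setting_def by auto
  ultimately show "dim (X \<inter> Y) = 1" using x y by simp
qed

lemma UU_props:
  assumes "setting H B" "v \<in> UU H B"
  shows "subspace v" "dim v = 1" "v \<subseteq> H"
  using assms UU_dim[OF assms(1)] LL_dim[OF assms(1)] unfolding UU_def by blast+

lemma two_lines_int:
  assumes "setting H B" "X \<in> LL H B" "Y \<in> LL H B" "X \<noteq> Y" "subspace v" "dim v = 1" "v \<subseteq> X \<inter> Y"
  shows "v = X \<inter> Y"
  using subspace_dim_equal[OF assms(5) _ assms(7)] UU_dim[OF assms(1-4)] assms(6) by simp

lemma finite_LL: "hyps B \<Longrightarrow> finite (LL H B)"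
  unfolding LL_def hyps_def by simp

lemma finite_UU: "hyps B \<Longrightarrow> finite (UU H B)"
proof -
  assume "hyps B"
  then have "UU H B \<subseteq> (\<lambda>(X,Y). X \<inter> Y) ` (LL H B \<times> LL H B)" unfolding UU_def by auto
  then show ?thesis using finite_LL[OF \<open>hyps B\<close>] by (meson finite_SigmaI finite_imageI finite_subset)
qed

lemma LL_mono: "B' \<subseteq> B \<Longrightarrow> LL H B' \<subseteq> LL H B"
  unfolding LL_def by auto

lemma setting_sub: "setting H B \<Longrightarrow> B' \<subseteq> B \<Longrightarrow> setting H B'"
  unfolding setting_def using hyps_subset by blast

lemma hyp_not_sub:
  assumes "lin_hyperplane H" "lin_hyperplane H'" "H \<noteq> H'"
  shows "\<not> H \<subseteq> H'"
  using subspace_dim_equal[of H H'] assms hyp_subspace hyp_dim by auto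

lemma L3D:
  assumes "setting H BA" "B \<subseteq> BA" "B \<noteq> {}"
  shows "card (reg H B) \<ge> 2 + 2 * (\<Sum>v\<in>UU H BA. rr H B v - 1)"
proof -
  have "finite BA" using assms(1) unfolding setting_def hyps_def by auto
  then have fB: "finite B" using assms(2) by (rule finite_subset[rotated])
  have hH: "lin_hyperplane H" using assms(1) setting_def by auto
  have sH: "subspace H" using hH hyp_subspace by auto
  have fU: "finite (UU H BA)" using assms(1) finite_UU setting_def by auto
  show ?thesis using fB assms(3,2)
  proof (induction B rule: finite_ne_induct)
    case (singleton H0)
    have h0: "lin_hyperplane H0" "H \<noteq> H0" using singleton assms(1) unfolding setting_def hyps_def by auto
    obtain x where x: "x \<in> H" "x \<notin> H0" using hyp_not_sub[OF hH h0(1) h0(2)] by auto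
    have "card (reg H {H0}) \<ge> 2"
      by (rule reg_two) (use h0 x sH in \<open>auto simp: hyps_def\<close>)
    moreover have "rr H {H0} v \<le> 1" for v
    proof -
      have "{X \<in> LL H {H0}. v \<subseteq> X} \<subseteq> {H \<inter> H0}" unfolding LL_def by auto
      then have "card {X \<in> LL H {H0}. v \<subseteq> X} \<le> card {H \<inter> H0}" by (rule card_mono[rotated]) simp
      then show ?thesis unfolding rr_def by simp
    qed
    then have "(\<Sum>v\<in>UU H BA. rr H {H0} v - 1) = 0" by (simp add: sum_nonpos)
    ultimately show ?case by simp
  next
    case (insert H0 B)
    have st: "setting H (insert H0 B)" using setting_sub[OF assms(1) insert.prems] .
    then have hB: "hyps B" and h0: "lin_hyperplane H0" and HH0: "H \<noteq> H0"
      unfolding setting_def using hyps_insert by auto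
    have stB: "setting H B" using setting_sub[OF st] by auto
    have IH: "card (reg H B) \<ge> 2 + 2 * (\<Sum>v\<in>UU H BA. rr H B v - 1)"
      using insert.IH insert.prems by auto
    have DR: "card (reg H (insert H0 B)) \<ge> card (reg H B) + card (reg (H \<inter> H0) B)"
      by (rule DR_lower[OF hB h0 insert.hyps(3) sH hyp_not_sub[OF hH h0 HH0]])
    define X0 where "X0 = H \<inter> H0"
    have LLi: "LL H (insert H0 B) = insert X0 (LL H B)" unfolding LL_def X0_def by auto
    show ?case
    proof (cases "X0 \<in> LL H B")
      case True
      then have "LL H (insert H0 B) = LL H B" using LLi by auto
      then have "rr H (insert H0 B) = rr H B" unfolding rr_def by (auto intro!: ext)
      then show ?thesis using IH DR by simp
    next
      case False
      have X0LL: "X0 \<in> LL H BA" using insert.prems unfolding LL_def X0_def by auto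
      have X0d: "subspace X0" "dim X0 = 2" using LL_dim[OF assms(1) X0LL] by auto
      have nsub: "\<forall>H'\<in>B. \<not> X0 \<subseteq> H'"
      proof
        fix H' assume H': "H' \<in> B"
        show "\<not> X0 \<subseteq> H'"
        proof
          assume "X0 \<subseteq> H'"
          then have "X0 \<subseteq> H \<inter> H'" unfolding X0_def by auto
          moreover have "H \<inter> H' \<in> LL H B" using H' unfolding LL_def by auto
          moreover have "subspace (H \<inter> H')" "dim (H \<inter> H') = 2"
            using LL_dim[OF stB \<open>H \<inter> H' \<in> LL H B\<close>] by auto
          ultimately have "X0 = H \<inter> H'"
            using subspace_dim_equal[OF X0d(1)] X0d by simp
          then show False using False \<open>H \<inter> H' \<in> LL H B\<close> by auto
        qed
      qed
      define N where "N = (\<lambda>H'. X0 \<inter> H') ` B"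
      have L2: "card (reg X0 B) \<ge> 2 * card N"
        unfolding N_def by (rule L2D[OF hB X0d nsub])
      have rr_ins: "rr H (insert H0 B) v = rr H B v + (if v \<subseteq> X0 then 1 else 0)" for v
      proof -
        have fL: "finite (LL H B)" using finite_LL[OF hB] .
        have "{X \<in> LL H (insert H0 B). v \<subseteq> X} = (if v \<subseteq> X0 then insert X0 {X \<in> LL H B. v \<subseteq> X} else {X \<in> LL H B. v \<subseteq> X})"
          using LLi by auto
        then show ?thesis unfolding rr_def using False fL by simp
      qed
      have Nset: "{v \<in> UU H BA. v \<subseteq> X0 \<and> rr H B v \<ge> 1} = N"
      proof
        show "{v \<in> UU H BA. v \<subseteq> X0 \<and> rr H B v \<ge> 1} \<subseteq> N"
        proof
          fix v assume v: "v \<in> {v \<in> UU H BA. v \<subseteq> X0 \<and> rr H B v \<ge> 1}"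
          then have "rr H B v \<ge> 1" by simp
          then have "{X \<in> LL H B. v \<subseteq> X} \<noteq> {}" unfolding rr_def by (intro notI) simp
          then obtain H' where H': "H' \<in> B" "v \<subseteq> H \<inter> H'" unfolding LL_def by auto
          have vd: "subspace v" "dim v = 1" using UU_props[OF assms(1)] v by auto
          have "H \<inter> H' \<in> LL H BA" using H' insert.prems unfolding LL_def by auto
          moreover have "X0 \<noteq> H \<inter> H'" using False H' unfolding LL_def by auto
          ultimately have "v = X0 \<inter> (H \<inter> H')"
            using two_lines_int[OF assms(1) X0LL _ _ vd] v H' by auto
          then have "v = X0 \<inter> H'" unfolding X0_def by auto
          then show "v \<in> N" unfolding N_def using H' by auto
        qed
        show "N \<subseteq> {v \<in> UU H BA. v \<subseteq> X0 \<and> rr H B v \<ge> 1}"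
        proof
          fix v assume "v \<in> N"
          then obtain H' where H': "H' \<in> B" "v = X0 \<inter> H'" unfolding N_def by auto
          have L1: "H \<inter> H' \<in> LL H BA" using H' insert.prems unfolding LL_def by auto
          have L1': "H \<inter> H' \<in> LL H B" using H' unfolding LL_def by auto
          have ne: "X0 \<noteq> H \<inter> H'" using False L1' by auto
          have "v = X0 \<inter> (H \<inter> H')" using H' unfolding X0_def by auto
          then have "v \<in> UU H BA" using X0LL L1 ne unfolding UU_def by blast
          moreover have "rr H B v \<ge> 1"
          proof -
            have "H \<inter> H' \<in> {X \<in> LL H B. v \<subseteq> X}" using L1' H' unfolding X0_def by auto
            moreover have "finite {X \<in> LL H B. v \<subseteq> X}" using finite_LL[OF hB] by simp
            ultimately have "card {X \<in> LL H B. v \<subseteq> X} > 0" by (simp only: card_gt_0_iff) blast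
            then show ?thesis unfolding rr_def by simp
          qed
          ultimately show "v \<in> {v \<in> UU H BA. v \<subseteq> X0 \<and> rr H B v \<ge> 1}" using H' by auto
        qed
      qed
      have "(\<Sum>v\<in>UU H BA. rr H (insert H0 B) v - 1)
          = (\<Sum>v\<in>UU H BA. (rr H B v - 1) + (if v \<subseteq> X0 \<and> rr H B v \<ge> 1 then 1 else 0))"
        by (rule sum.cong) (auto simp: rr_ins)
      also have "\<dots> = (\<Sum>v\<in>UU H BA. rr H B v - 1) + card {v \<in> UU H BA. v \<subseteq> X0 \<and> rr H B v \<ge> 1}"
        using fU by (simp add: sum.distrib sum.If_cases Int_def)
      finally have "(\<Sum>v\<in>UU H BA. rr H (insert H0 B) v - 1) = (\<Sum>v\<in>UU H BA. rr H B v - 1) + card N"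
        using Nset by simp
      then show ?thesis using IH DR L2 unfolding X0_def by simp
    qed
  qed
qed

lemma opp_comb:
  fixes a b :: real
  assumes "a \<noteq> 0" "b \<noteq> 0" "sgn a \<noteq> sgn b"
  shows "\<bar>b\<bar> * a + \<bar>a\<bar> * b = 0"
proof (cases "a > 0")
  case True
  have "\<not> b > 0"
  proof
    assume "b > 0"
    then show False using True assms(3) by simp
  qed
  then have "b < 0" using assms(2) by linarith
  then show ?thesis using True by simp
next
  case False
  then have "a < 0" using assms(1) by simp
  have "\<not> b < 0"
  proof
    assume "b < 0"
    then show False using \<open>a < 0\<close> assms(3) by simp
  qed
  then have "b > 0" using assms(2) by linarith
  then show ?thesis using \<open>a < 0\<close> by simp
qed

lemma new_line_not_sub:
  assumes "setting H B" "lin_hyperplane H0" "H0 \<noteq> H" "H \<inter> H0 \<notin> LL H B"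
  shows "\<forall>H'\<in>B. \<not> H \<inter> H0 \<subseteq> H'"
proof
  fix H' assume H': "H' \<in> B"
  have st0: "setting H {H0}" using assms(1,2,3) unfolding setting_def hyps_def by auto
  have X0LL: "H \<inter> H0 \<in> LL H {H0}" unfolding LL_def by auto
  have X0d: "subspace (H \<inter> H0)" "dim (H \<inter> H0) = 2" using LL_dim[OF st0 X0LL] by auto
  show "\<not> H \<inter> H0 \<subseteq> H'"
  proof
    assume "H \<inter> H0 \<subseteq> H'"
    then have "H \<inter> H0 \<subseteq> H \<inter> H'" by auto
    moreover have L: "H \<inter> H' \<in> LL H B" using H' unfolding LL_def by auto
    moreover have "subspace (H \<inter> H')" "dim (H \<inter> H') = 2"
      using LL_dim[OF assms(1) L] by auto
    ultimately have "H \<inter> H0 = H \<inter> H'"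
      using subspace_dim_equal[OF X0d(1)] X0d by simp
    then show False using assms(4) L by auto
  qed
qed

lemma sv_val:
  assumes "hyps B" "H \<in> B" "x \<notin> \<Union>B"
  shows "sv B x H = 1 \<or> sv B x H = -1"
proof -
  have "nv H \<bullet> x \<noteq> 0" using assms mem_hyp unfolding hyps_def by auto
  then show ?thesis using assms(2) unfolding sv_def by (auto simp: sgn_if)
qed

lemma U2:
  assumes st: "setting H BA" and u: "u \<in> H" "u \<noteq> 0"
    and B: "B \<subseteq> {H' \<in> BA. u \<in> H'}" "B \<noteq> {}"
  shows "card (reg H B) \<le> 2 * card (LL H B)"
proof -
  have "finite BA" using st unfolding setting_def hyps_def by auto
  moreover have "B \<subseteq> BA" using B(1) by auto
  ultimately have fB: "finite B" using finite_subset by blast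
  have hH: "lin_hyperplane H" using st setting_def by auto
  have sH: "subspace H" using hH hyp_subspace by auto
  show ?thesis using fB B(2,1)
  proof (induction B rule: finite_ne_induct)
    case (singleton H0)
    have h0: "lin_hyperplane H0" "H0 \<notin> {}" using singleton st unfolding setting_def hyps_def by auto
    have "card (reg H {H0}) \<le> card (reg H {}) + card (reg (H \<inter> H0) {})"
      by (rule DR_upper[OF _ h0(1) h0(2) sH]) (simp add: hyps_def)
    also have "\<dots> \<le> 2" using reg_empty_le[of H] reg_empty_le[of "H \<inter> H0"] by simp
    finally show ?case unfolding LL_def by simp
  next
    case (insert H0 B)
    have "insert H0 B \<subseteq> BA" using insert.prems by blast
    then have st': "setting H (insert H0 B)" by (rule setting_sub[OF st])
    then have hB: "hyps B" and h0: "lin_hyperplane H0" and HH0: "H0 \<noteq> H"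
      unfolding setting_def using hyps_insert by auto
    have stB: "setting H B" using setting_sub[OF st'] by auto
    have IH: "card (reg H B) \<le> 2 * card (LL H B)" using insert.IH insert.prems by auto
    have DR: "card (reg H (insert H0 B)) \<le> card (reg H B) + card (reg (H \<inter> H0) B)"
      by (rule DR_upper[OF hB h0 insert.hyps(3) sH])
    define X0 where "X0 = H \<inter> H0"
    have LLi: "LL H (insert H0 B) = insert X0 (LL H B)" unfolding LL_def X0_def by auto
    show ?case
    proof (cases "X0 \<in> LL H B")
      case True
      then obtain H' where H': "H' \<in> B" "X0 = H \<inter> H'" unfolding LL_def by auto
      have "reg X0 B = {}" unfolding reg_def using H' by auto
      then show ?thesis using IH DR LLi True unfolding X0_def by (simp add: insert_absorb)
    next
      case False
      have ci: "card (LL H (insert H0 B)) = card (LL H B) + 1"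
        using LLi False finite_LL[OF hB] by simp
      have st0: "setting H {H0}" using h0 HH0 hH unfolding setting_def hyps_def by auto
      have X0d: "subspace X0" "dim X0 = 2" using LL_dim[OF st0, of X0] unfolding LL_def X0_def by auto
      have nsub: "\<forall>H'\<in>B. \<not> X0 \<subseteq> H'"
        using new_line_not_sub[OF stB h0 HH0] False unfolding X0_def by auto
      obtain H1 where H1: "H1 \<in> B" using insert.hyps(2) by auto
      have hB1: "lin_hyperplane H1" using H1 hB hyps_def by auto
      have uH1: "u \<in> H1" using H1 insert.prems by auto
      have uX0: "u \<in> X0" using insert.prems u unfolding X0_def by auto
      have inj: "inj_on (\<lambda>\<sigma>. \<sigma> H1) (reg X0 B)"
      proof (rule inj_onI)
        fix \<sigma> \<tau> assume s: "\<sigma> \<in> reg X0 B" and t: "\<tau> \<in> reg X0 B" and eq: "\<sigma> H1 = \<tau> H1"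
        obtain x where x: "x \<in> X0" "x \<notin> \<Union>B" "\<sigma> = sv B x" using s unfolding reg_def by auto
        obtain y where y: "y \<in> X0" "y \<notin> \<Union>B" "\<tau> = sv B y" using t unfolding reg_def by auto
        show "\<sigma> = \<tau>"
        proof (rule ccontr)
          assume "\<sigma> \<noteq> \<tau>"
          then have "sv B x \<noteq> sv B y" using x y by simp
          then obtain Hi where Hi: "sv B x Hi \<noteq> sv B y Hi" by (meson ext)
          then have HiB: "Hi \<in> B" unfolding sv_def by (cases "Hi \<in> B") auto
          have hi: "lin_hyperplane Hi" using HiB hB hyps_def by auto
          define a where "a = nv Hi \<bullet> x"
          define b where "b = nv Hi \<bullet> y"
          have a0: "a \<noteq> 0" using x(2) HiB mem_hyp[OF hi] a_def by auto
          have b0: "b \<noteq> 0" using y(2) HiB mem_hyp[OF hi] b_def by auto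
          have "sgn a \<noteq> sgn b" using Hi HiB unfolding sv_def a_def b_def by simp
          then have ab: "\<bar>b\<bar> * a + \<bar>a\<bar> * b = 0" by (rule opp_comb[OF a0 b0])
          define z where "z = \<bar>b\<bar> *\<^sub>R x + \<bar>a\<bar> *\<^sub>R y"
          have zX0: "z \<in> X0" unfolding z_def using x(1) y(1) X0d(1)
            by (simp add: subspace_add subspace_scale)
          have zHi: "z \<in> Hi" using ab mem_hyp[OF hi] unfolding z_def a_def b_def
            by (simp add: inner_add_right)
          have "X0 \<inter> Hi = span {u}"
            by (rule int_dim_le1[OF X0d hyp_subspace[OF hi]]) (use nsub HiB uX0 insert.prems u in auto)
          moreover have "span {u} \<subseteq> H1" using uH1 hyp_subspace[OF hB1] span_minimal by (metis empty_subsetI insert_subset)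
          ultimately have "z \<in> H1" using zX0 zHi by auto
          moreover have "sgn (nv H1 \<bullet> z) = sgn (nv H1 \<bullet> x)"
          proof -
            have "sgn (nv H1 \<bullet> x) = sgn (nv H1 \<bullet> y)" using eq x y H1 unfolding sv_def by simp
            moreover have "nv H1 \<bullet> x \<noteq> 0" using x(2) H1 mem_hyp[OF hB1] by auto
            ultimately show ?thesis unfolding z_def using sgn_pos_comb[of "\<bar>b\<bar>" "\<bar>a\<bar>"] a0 b0
              by (simp add: inner_add_right)
          qed
          moreover have "nv H1 \<bullet> x \<noteq> 0" using x(2) H1 mem_hyp[OF hB1] by auto
          ultimately show False using mem_hyp[OF hB1] by (simp add: sgn_zero_iff)
        qed
      qed
      have img: "(\<lambda>\<sigma>. \<sigma> H1) ` reg X0 B \<subseteq> {1, -1}"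
        using sv_val[OF hB H1] unfolding reg_def by auto
      have "card (reg X0 B) \<le> card {1, -1::real}"
        by (rule card_inj_on_le[OF inj img]) simp
      then have "card (reg X0 B) \<le> 2" by simp
      then show ?thesis using IH DR ci unfolding X0_def by simp
    qed
  qed
qed

lemma Vchar:
  assumes st: "setting H BA" and T: "T \<subseteq> BA" and W: "W = H \<inter> \<Inter>T" "dim W = 1"
  shows "W \<in> UU H BA"
proof -
  have hH: "lin_hyperplane H" using st setting_def by auto
  have hT: "\<forall>H'\<in>T. lin_hyperplane H'" using st T unfolding setting_def hyps_def by auto
  have sW: "subspace W" unfolding W(1)
    using hT hH hyp_subspace by (auto intro!: subspace_inter subspace_Inter)
  have "T \<noteq> {}"
  proof
    assume "T = {}"
    then have "W = H" using W by simp
    then show False using W hyp_dim[OF hH] by simp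
  qed
  then obtain H1 where H1: "H1 \<in> T" by auto
  define X where "X = H \<inter> H1"
  have XL: "X \<in> LL H BA" using H1 T unfolding X_def LL_def by auto
  show ?thesis
  proof (cases "\<forall>H'\<in>T. H \<inter> H' = X")
    case True
    then have "W = X" unfolding W(1) X_def using H1 by blast
    then show ?thesis using LL_dim[OF st XL] W by simp
  next
    case False
    then obtain H2 where H2: "H2 \<in> T" "H \<inter> H2 \<noteq> X" by auto
    define Y where "Y = H \<inter> H2"
    have YL: "Y \<in> LL H BA" using H2 T unfolding Y_def LL_def by auto
    have "W \<subseteq> X \<inter> Y" unfolding W(1) X_def Y_def using H1 H2 by blast
    then have "W = X \<inter> Y" using two_lines_int[OF st XL YL _ sW W(2)] H2 Y_def by auto
    then show ?thesis unfolding UU_def using XL YL H2 Y_def by blast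
  qed
qed

definition bv :: "(real^4) set \<Rightarrow> real^4" where
  "bv v = (SOME b. b \<noteq> 0 \<and> v = span {b})"

lemma bv:
  assumes "subspace v" "dim v = 1"
  shows "bv v \<noteq> 0" "v = span {bv v}"
proof -
  obtain x where x: "x \<in> v" "x \<noteq> 0" using dim_ge1_ex[of v] assms by auto
  have "v = span {x}" using dim_le1_span[OF assms(1) _ x] assms by simp
  then have "\<exists>b. b \<noteq> 0 \<and> v = span {b}" using x by blast
  then show "bv v \<noteq> 0" "v = span {bv v}" using someI_ex unfolding bv_def by (metis (mono_tags, lifting))+
qed

definition Rays :: "(real^4) set \<Rightarrow> (real^4) set set \<Rightarrow> (real^4) set" where
  "Rays H BA = bv ` UU H BA \<union> (\<lambda>v. - bv v) ` UU H BA"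

definition cone :: "(real^4) set \<Rightarrow> (real^4) set set \<Rightarrow> ((real^4) set \<Rightarrow> real) \<Rightarrow> (real^4) set" where
  "cone H BA \<sigma> = {x \<in> H. \<forall>H'\<in>BA. \<sigma> H' * (nv H' \<bullet> x) \<ge> 0}"

lemma Rays_props:
  assumes st: "setting H BA" and u: "u \<in> Rays H BA"
  obtains v where "v \<in> UU H BA" "u \<in> v" "u \<noteq> 0" "v = span {u}" "u \<in> H" "\<exists>H1\<in>BA. u \<in> H1"
proof -
  obtain v where v: "v \<in> UU H BA" "u = bv v \<or> u = - bv v" using u unfolding Rays_def by auto
  have vp: "subspace v" "dim v = 1" "v \<subseteq> H" using UU_props[OF st v(1)] by auto
  have b: "bv v \<noteq> 0" "v = span {bv v}" using bv[OF vp(1,2)] by auto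
  have u0: "u \<noteq> 0" using v(2) b(1) by auto
  have uv: "u \<in> v" using v(2) b(2) vp(1) by (metis span_base singletonI subspace_neg)
  have "v = span {u}" using dim_le1_span[OF vp(1) _ uv u0] vp(2) by simp
  moreover obtain X Y where XY: "X \<in> LL H BA" "Y \<in> LL H BA" "v = X \<inter> Y" using v(1) unfolding UU_def by auto
  then obtain H1 where "H1 \<in> BA" "X = H \<inter> H1" unfolding LL_def by auto
  then have "\<exists>H1\<in>BA. u \<in> H1" using uv XY by auto
  ultimately show ?thesis using that v(1) uv u0 vp(3) by blast
qed

lemma sgn_det:
  fixes s a :: real
  assumes "s = 1 \<or> s = -1" "a \<noteq> 0" "s * a \<ge> 0"
  shows "s = sgn a"
  using assms by (cases "a > 0") (auto simp: sgn_if mult_less_0_iff)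

lemma b2:
  assumes st: "setting H BA" and u: "u \<in> Rays H BA"
  shows "card {\<sigma> \<in> reg H BA. u \<in> cone H BA \<sigma>} \<le> 2 * card (LL H {H' \<in> BA. u \<in> H'})"
proof -
  obtain v where v: "v \<in> UU H BA" "u \<in> v" "u \<noteq> 0" "v = span {u}" "u \<in> H" "\<exists>H1\<in>BA. u \<in> H1"
    using Rays_props[OF st u] by blast
  define Bu where "Bu = {H' \<in> BA. u \<in> H'}"
  have hBA: "hyps BA" using st setting_def by auto
  have fin: "finite (reg H BA)" using finite_reg hBA hyps_def by auto
  have Bu0: "Bu \<noteq> {}" using v(6) Bu_def by auto
  define f where "f = (\<lambda>\<sigma> H'. if H' \<in> Bu then \<sigma> H' else (0::real))"
  have inj: "inj_on f {\<sigma> \<in> reg H BA. u \<in> cone H BA \<sigma>}"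
  proof (rule inj_onI)
    fix \<sigma> \<tau> assume s: "\<sigma> \<in> {\<sigma> \<in> reg H BA. u \<in> cone H BA \<sigma>}" and t: "\<tau> \<in> {\<sigma> \<in> reg H BA. u \<in> cone H BA \<sigma>}"
      and eq: "f \<sigma> = f \<tau>"
    obtain x where x: "x \<in> H" "x \<notin> \<Union>BA" "\<sigma> = sv BA x" using s unfolding reg_def by auto
    obtain y where y: "y \<in> H" "y \<notin> \<Union>BA" "\<tau> = sv BA y" using t unfolding reg_def by auto
    show "\<sigma> = \<tau>"
    proof (rule ext)
      fix H'
      show "\<sigma> H' = \<tau> H'"
      proof (cases "H' \<in> BA")
        case False
        then show ?thesis using x y unfolding sv_def by simp
      next
        case True
        show ?thesis
        proof (cases "H' \<in> Bu")
          case True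
          then show ?thesis using eq unfolding f_def by metis
        next
          case False
          have hH': "lin_hyperplane H'" using \<open>H' \<in> BA\<close> hBA hyps_def by auto
          have nu: "nv H' \<bullet> u \<noteq> 0" using False \<open>H' \<in> BA\<close> mem_hyp[OF hH'] unfolding Bu_def by auto
          have "\<sigma> H' = sgn (nv H' \<bullet> u)"
            using sgn_det[OF _ nu] sv_val[OF hBA \<open>H' \<in> BA\<close> x(2)] x(3) s \<open>H' \<in> BA\<close> unfolding cone_def by auto
          moreover have "\<tau> H' = sgn (nv H' \<bullet> u)"
            using sgn_det[OF _ nu] sv_val[OF hBA \<open>H' \<in> BA\<close> y(2)] y(3) t \<open>H' \<in> BA\<close> unfolding cone_def by auto
          ultimately show ?thesis by simp
        qed
      qed
    qed
  qed
  have img: "f ` {\<sigma> \<in> reg H BA. u \<in> cone H BA \<sigma>} \<subseteq> reg H Bu"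
  proof
    fix g assume "g \<in> f ` {\<sigma> \<in> reg H BA. u \<in> cone H BA \<sigma>}"
    then obtain x where x: "x \<in> H" "x \<notin> \<Union>BA" "g = f (sv BA x)" unfolding reg_def by auto
    have "g = sv Bu x" unfolding x(3) f_def sv_def Bu_def by (rule ext) auto
    moreover have "x \<notin> \<Union>Bu" using x(2) unfolding Bu_def by auto
    ultimately show "g \<in> reg H Bu" using x(1) unfolding reg_def by auto
  qed
  have "card {\<sigma> \<in> reg H BA. u \<in> cone H BA \<sigma>} \<le> card (reg H Bu)"
    by (rule card_inj_on_le[OF inj img]) (use finite_reg hBA hyps_def Bu_def in auto)
  also have "\<dots> \<le> 2 * card (LL H Bu)"
    by (rule U2[OF st v(5) v(3)]) (use Bu_def Bu0 in auto)
  finally show ?thesis unfolding Bu_def .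
qed

lemma sgn_keep:
  fixes s a b :: real
  assumes "s * a \<ge> 0" "sgn b = sgn a"
  shows "s * b \<ge> 0"
proof (cases "a > 0")
  case True
  then have "b > 0" using assms(2) by (metis sgn_greater)
  have "s \<ge> 0" using assms(1) True by (simp add: zero_le_mult_iff)
  then show ?thesis using \<open>b > 0\<close> by simp
next
  case False
  show ?thesis
  proof (cases "a = 0")
    case True
    then have "b = 0" using assms(2) by (simp add: sgn_zero_iff)
    then show ?thesis by simp
  next
    case False
    then have "a < 0" using \<open>\<not> a > 0\<close> by simp
    then have "b < 0" using assms(2) by (metis sgn_less)
    have "s \<le> 0" using assms(1) \<open>a < 0\<close> by (simp add: zero_le_mult_iff)
    then show ?thesis using \<open>b < 0\<close> by (simp add: mult_nonpos_nonpos)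
  qed
qed

lemma cone_scale:
  assumes "setting H BA" "x \<in> cone H BA \<sigma>" "t \<ge> 0"
  shows "t *\<^sub>R x \<in> cone H BA \<sigma>"
proof -
  have sH: "subspace H" using assms(1) hyp_subspace setting_def by auto
  have "t *\<^sub>R x \<in> H" using assms(2) sH unfolding cone_def by (simp add: subspace_scale)
  moreover have "\<sigma> H' * (nv H' \<bullet> (t *\<^sub>R x)) \<ge> 0" if "H' \<in> BA" for H'
  proof -
    have "\<sigma> H' * (nv H' \<bullet> x) \<ge> 0" using assms(2) that unfolding cone_def by auto
    then have "t * (\<sigma> H' * (nv H' \<bullet> x)) \<ge> 0" using assms(3) by simp
    then show ?thesis by (simp add: algebra_simps)
  qed
  ultimately show ?thesis unfolding cone_def by auto
qed

lemma sgn_self_pos: "(a::real) \<noteq> 0 \<Longrightarrow> sgn a * a > 0"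
  by (cases "a > 0") (auto simp: sgn_if)

lemma corner3:
  assumes st: "setting H BA" and int0: "\<forall>x. x \<in> H \<and> (\<forall>H'\<in>BA. x \<in> H') \<longrightarrow> x = 0"
    and sR: "\<sigma> \<in> reg H BA"
  shows "card {u \<in> Rays H BA. u \<in> cone H BA \<sigma>} \<ge> 3"
proof -
  have hBA: "hyps BA" and hH: "lin_hyperplane H" using st setting_def by auto
  have sH: "subspace H" using hH hyp_subspace by auto
  have fBA: "finite BA" using hBA hyps_def by auto
  have hyp: "\<And>H'. H' \<in> BA \<Longrightarrow> lin_hyperplane H'" using hBA hyps_def by auto
  obtain x0 where x0: "x0 \<in> H" "x0 \<notin> \<Union>BA" "\<sigma> = sv BA x0" using sR unfolding reg_def by auto
  have snz: "\<forall>H'\<in>BA. nv H' \<bullet> x0 \<noteq> 0" using x0(2) mem_hyp hyp by blast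
  have sig: "\<sigma> H' * (nv H' \<bullet> x0) > 0" if "H' \<in> BA" for H'
    using snz that x0(3) sgn_self_pos unfolding sv_def by auto
  have spm: "\<sigma> H' = 1 \<or> \<sigma> H' = -1" if "H' \<in> BA" for H'
    using sv_val[OF hBA that x0(2)] x0(3) by simp
  have "BA \<noteq> {}"
  proof
    assume "BA = {}"
    obtain y where y: "y \<in> H" "y \<noteq> 0" using dim_ge1_ex[of H] hyp_dim[OF hH] by auto
    have "y \<in> H \<and> (\<forall>H'\<in>BA. y \<in> H')" using y \<open>BA = {}\<close> by simp
    then have "y = 0" using int0 by blast
    then show False using y by simp
  qed
  then obtain Hb where "Hb \<in> BA" by auto
  then have x0nz: "x0 \<noteq> 0" using x0(2) zero_in_hyp[OF hyp[OF \<open>Hb \<in> BA\<close>]] by auto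
  define c where "c = (\<Sum>H'\<in>BA. \<sigma> H' *\<^sub>R nv H')"
  have cdot: "c \<bullet> x = (\<Sum>H'\<in>BA. \<sigma> H' * (nv H' \<bullet> x))" for x
    unfolding c_def by (simp add: inner_sum_left)
  have cpos: "c \<bullet> x > 0" if xc: "x \<in> cone H BA \<sigma>" and xnz: "x \<noteq> 0" for x
  proof -
    have nn: "\<And>H'. H' \<in> BA \<Longrightarrow> \<sigma> H' * (nv H' \<bullet> x) \<ge> 0" using xc unfolding cone_def by auto
    have "(\<Sum>H'\<in>BA. \<sigma> H' * (nv H' \<bullet> x)) \<ge> 0" by (intro sum_nonneg nn)
    then have "c \<bullet> x \<ge> 0" by (simp only: cdot)
    moreover have "c \<bullet> x \<noteq> 0"
    proof
      assume "c \<bullet> x = 0"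
      have "(\<Sum>H'\<in>BA. \<sigma> H' * (nv H' \<bullet> x)) = c \<bullet> x" by (rule cdot[symmetric])
      also have "\<dots> = 0" by fact
      finally have "(\<Sum>H'\<in>BA. \<sigma> H' * (nv H' \<bullet> x)) = 0" .
      then have "\<forall>H'\<in>BA. \<sigma> H' * (nv H' \<bullet> x) = 0"
        using sum_nonneg_eq_0_iff[of BA "\<lambda>H'. \<sigma> H' * (nv H' \<bullet> x)"] fBA nn by simp
      then have "\<forall>H'\<in>BA. x \<in> H'"
      proof (intro ballI)
        fix H' assume "\<forall>H'\<in>BA. \<sigma> H' * (nv H' \<bullet> x) = 0" "H' \<in> BA"
        then have "\<sigma> H' * (nv H' \<bullet> x) = 0" by auto
        moreover have "\<sigma> H' \<noteq> 0" using spm[OF \<open>H' \<in> BA\<close>] by auto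
        ultimately have "nv H' \<bullet> x = 0" by simp
        then show "x \<in> H'" using mem_hyp[OF hyp[OF \<open>H' \<in> BA\<close>]] by simp
      qed
      moreover have "x \<in> H" using xc unfolding cone_def by auto
      ultimately have "x = 0" using int0 by blast
      then show False using xnz by simp
    qed
    ultimately show ?thesis by simp
  qed
  have x0c: "x0 \<in> cone H BA \<sigma>" using x0(1) sig unfolding cone_def by (auto intro: less_imp_le)
  have cx0: "c \<bullet> x0 > 0" using cpos[OF x0c x0nz] .
  have c0: "c \<noteq> 0" using cx0 by auto
  define K where "K = cone H BA \<sigma> \<inter> {x. c \<bullet> x = 1}"
  have coneq: "cone H BA \<sigma> = H \<inter> (\<Inter>H'\<in>BA. {x. 0 \<le> (\<sigma> H' *\<^sub>R nv H') \<bullet> x})"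
    unfolding cone_def by auto
  have ccl: "closed (cone H BA \<sigma>)" unfolding coneq
    by (intro closed_Int closed_INT closed_subspace[OF sH] ballI closed_halfspace_ge)
  have ccv: "convex (cone H BA \<sigma>)" unfolding coneq
    by (intro convex_Int convex_INT subspace_imp_convex[OF sH] ballI convex_halfspace_ge)
  have Kcl: "closed K" unfolding K_def by (intro closed_Int ccl closed_hyperplane)
  have Kcv: "convex K" unfolding K_def by (intro convex_Int ccv convex_hyperplane)
  have Kbd: "bounded K"
  proof -
    define Sph where "Sph = cone H BA \<sigma> \<inter> sphere 0 1"
    have cS: "compact Sph" unfolding Sph_def by (intro closed_Int_compact ccl compact_sphere)
    have "(1 / norm x0) *\<^sub>R x0 \<in> Sph" unfolding Sph_def using cone_scale[OF st x0c] x0nz by auto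
    then have neS: "Sph \<noteq> {}" by auto
    have "continuous_on Sph (\<lambda>x. c \<bullet> x)" by (intro continuous_intros)
    then obtain p where p: "p \<in> Sph" "\<And>y. y \<in> Sph \<Longrightarrow> c \<bullet> p \<le> c \<bullet> y"
      using continuous_attains_inf[OF cS neS] by blast
    have "p \<noteq> 0" using p(1) unfolding Sph_def by auto
    then have mu: "c \<bullet> p > 0" using cpos p(1) unfolding Sph_def by auto
    have "norm x \<le> 1 / (c \<bullet> p)" if "x \<in> K" for x
    proof -
      have xc: "x \<in> cone H BA \<sigma>" "c \<bullet> x = 1" using that unfolding K_def by auto
      then have xnz: "x \<noteq> 0" by auto
      then have nx: "norm x > 0" by simp
      have "(1 / norm x) *\<^sub>R x \<in> Sph" unfolding Sph_def using cone_scale[OF st xc(1)] xnz by auto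
      then have "c \<bullet> p \<le> c \<bullet> ((1 / norm x) *\<^sub>R x)" using p(2) by blast
      also have "\<dots> = 1 / norm x" using xc(2) by simp
      finally have "c \<bullet> p \<le> 1 / norm x" .
      then show ?thesis using mu nx by (simp add: field_simps)
    qed
    then show ?thesis unfolding bounded_iff by blast
  qed
  have Kcp: "compact K" using Kcl Kbd compact_eq_bounded_closed by blast
  define E where "E = {x. x extreme_point_of K}"
  have KE: "K = convex hull E" unfolding E_def by (rule Krein_Milman_Minkowski[OF Kcp Kcv])
  define x1 where "x1 = (1 / (c \<bullet> x0)) *\<^sub>R x0"
  have x1K: "x1 \<in> K" unfolding K_def x1_def using cone_scale[OF st x0c] cx0 by auto
  have x1nz: "\<forall>H'\<in>BA. nv H' \<bullet> x1 \<noteq> 0" using snz cx0 unfolding x1_def by simp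
  have x1pos: "\<sigma> H' * (nv H' \<bullet> x1) \<ge> 0" if "H' \<in> BA" for H'
    using x1K that unfolding K_def cone_def by auto
  have three: "\<exists>e1 e2 e3. e1 \<in> E \<and> e2 \<in> E \<and> e3 \<in> E \<and> e1 \<noteq> e2 \<and> e1 \<noteq> e3 \<and> e2 \<noteq> e3"
  proof (rule ccontr)
    assume nt: "\<not> ?thesis"
    have "\<exists>p q. E \<subseteq> {p, q}"
    proof (cases "E = {}")
      case True
      then show ?thesis by auto
    next
      case False
      then obtain p where p: "p \<in> E" by auto
      show ?thesis
      proof (cases "E \<subseteq> {p}")
        case True
        then show ?thesis by blast
      next
        case False
        then obtain q where q: "q \<in> E" "q \<noteq> p" by auto
        have "E \<subseteq> {p, q}" using nt p q by blast
        then show ?thesis by blast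
      qed
    qed
    then obtain p q where pq: "E \<subseteq> {p, q}" by blast
    have Kseg: "K \<subseteq> closed_segment p q"
      using KE hull_mono[OF pq, of convex] segment_convex_hull[of p q] by auto
    define D where "D = H \<inter> {x. c \<bullet> x = 0}"
    have "D \<subseteq> span {q - p}"
    proof
      fix d assume dD: "d \<in> D"
      obtain e where e: "e > 0" "\<And>t. \<bar>t\<bar> \<le> e \<Longrightarrow> (\<forall>H'\<in>BA. sgn (nv H' \<bullet> (x1 + t *\<^sub>R d)) = sgn (nv H' \<bullet> x1))"
        using perturb[OF fBA x1nz] by blast
      have "x1 + e *\<^sub>R d \<in> K"
      proof -
        have "x1 + e *\<^sub>R d \<in> H" using x1K dD sH unfolding K_def cone_def D_def
          by (simp add: subspace_add subspace_scale)
        moreover have "\<sigma> H' * (nv H' \<bullet> (x1 + e *\<^sub>R d)) \<ge> 0" if "H' \<in> BA" for H'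
          using sgn_keep[OF x1pos[OF that]] e that by auto
        moreover have "c \<bullet> (x1 + e *\<^sub>R d) = 1" using x1K dD unfolding K_def D_def
          by (simp add: inner_add_right)
        ultimately show ?thesis unfolding K_def cone_def by auto
      qed
      then obtain b where b: "x1 + e *\<^sub>R d = (1 - b) *\<^sub>R p + b *\<^sub>R q" using Kseg
        unfolding closed_segment_def by blast
      obtain a where a: "x1 = (1 - a) *\<^sub>R p + a *\<^sub>R q" using Kseg x1K
        unfolding closed_segment_def by blast
      have "e *\<^sub>R d = (x1 + e *\<^sub>R d) - x1" by simp
      also have "\<dots> = ((1 - b) *\<^sub>R p + b *\<^sub>R q) - ((1 - a) *\<^sub>R p + a *\<^sub>R q)"
        using a b by simp
      also have "\<dots> = (b - a) *\<^sub>R (q - p)" by (simp add: algebra_simps)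
      finally have "e *\<^sub>R d = (b - a) *\<^sub>R (q - p)" .
      then have "(1 / e) *\<^sub>R (e *\<^sub>R d) = (1 / e) *\<^sub>R ((b - a) *\<^sub>R (q - p))" by simp
      then have "d = ((b - a) / e) *\<^sub>R (q - p)" using e(1) by simp
      then show "d \<in> span {q - p}" unfolding span_singleton by auto
    qed
    then have "dim D \<le> dim (span {q - p})" by (rule dim_subset)
    also have "\<dots> \<le> 1" using dim_le_card'[of "{q - p}"] by (simp add: dim_span)
    finally have "dim D \<le> 1" .
    moreover have "dim H + dim {x. c \<bullet> x = 0} \<le> dim D + 4"
      unfolding D_def by (rule dim_int_ge[OF sH subspace_hyperplane])
    moreover have "dim {x. c \<bullet> x = 0} = 3" using dim_hyperplane[OF c0] by simp
    ultimately show False using hyp_dim[OF hH] by simp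
  qed
  have ray: "\<exists>u l. u \<in> Rays H BA \<and> u \<in> cone H BA \<sigma> \<and> l > 0 \<and> e = l *\<^sub>R u" if eE: "e \<in> E" for e
  proof -
    have ext: "e extreme_point_of K" using eE E_def by auto
    have eK: "e \<in> K" using ext extreme_point_of_def by auto
    then have ec: "e \<in> cone H BA \<sigma>" "c \<bullet> e = 1" unfolding K_def by auto
    then have enz: "e \<noteq> 0" by auto
    define T where "T = {H' \<in> BA. e \<in> H'}"
    define W where "W = H \<inter> \<Inter>T"
    have sW: "subspace W" unfolding W_def T_def
      using hyp hyp_subspace sH by (auto intro!: subspace_inter subspace_Inter)
    have eW: "e \<in> W" using ec(1) unfolding W_def T_def cone_def by auto
    have WH: "W \<subseteq> H" unfolding W_def by auto
    have Wsp: "W \<subseteq> span {e}"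
    proof
      fix w assume wW: "w \<in> W"
      define d where "d = w - (c \<bullet> w) *\<^sub>R e"
      have dW: "d \<in> W" unfolding d_def using sW wW eW by (simp add: subspace_diff subspace_scale)
      have cd: "c \<bullet> d = 0" unfolding d_def using ec(2) by (simp add: inner_diff_right)
      have "d = 0"
      proof (rule ccontr)
        assume dnz: "d \<noteq> 0"
        have fBT: "finite (BA - T)" using fBA by simp
        have enzT: "\<forall>H'\<in>BA - T. nv H' \<bullet> e \<noteq> 0" using mem_hyp hyp unfolding T_def by auto
        obtain ep where ep: "ep > 0" "\<And>t. \<bar>t\<bar> \<le> ep \<Longrightarrow> (\<forall>H'\<in>BA - T. sgn (nv H' \<bullet> (e + t *\<^sub>R d)) = sgn (nv H' \<bullet> e))"
          using perturb[OF fBT enzT] by blast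
        have inK: "e + t *\<^sub>R d \<in> K" if "\<bar>t\<bar> \<le> ep" for t
        proof -
          have "e + t *\<^sub>R d \<in> H" using eW dW WH sH by (meson subsetD subspace_add subspace_scale)
          moreover have "\<sigma> H' * (nv H' \<bullet> (e + t *\<^sub>R d)) \<ge> 0" if H': "H' \<in> BA" for H'
          proof (cases "H' \<in> T")
            case True
            then have "d \<in> H'" "e \<in> H'" using dW unfolding W_def T_def by auto
            then have "nv H' \<bullet> (e + t *\<^sub>R d) = 0"
              using mem_hyp[OF hyp[OF H']] by (simp add: inner_add_right)
            then show ?thesis by simp
          next
            case False
            have "\<sigma> H' * (nv H' \<bullet> e) \<ge> 0" using ec(1) H' unfolding cone_def by auto
            then show ?thesis using sgn_keep ep(2)[OF \<open>\<bar>t\<bar> \<le> ep\<close>] False H' by blast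
          qed
          moreover have "c \<bullet> (e + t *\<^sub>R d) = 1" using ec(2) cd by (simp add: inner_add_right)
          ultimately show ?thesis unfolding K_def cone_def by auto
        qed
        have a: "e + ep *\<^sub>R d \<in> K" using inK ep(1) by auto
        have b: "e + (-ep) *\<^sub>R d \<in> K" using inK[of "-ep"] ep(1) by simp
        have ne: "e + ep *\<^sub>R d \<noteq> e + (-ep) *\<^sub>R d"
        proof
          assume "e + ep *\<^sub>R d = e + (-ep) *\<^sub>R d"
          then have "ep *\<^sub>R d - (-ep) *\<^sub>R d = 0" by simp
          then have "(ep - (-ep)) *\<^sub>R d = 0" by (simp only: scaleR_diff_left)
          then show False using ep(1) dnz by simp
        qed
        have "(e + ep *\<^sub>R d) + (e + (-ep) *\<^sub>R d) = 2 *\<^sub>R e"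
          by (simp only: scaleR_2 scaleR_minus_left) (simp add: add.assoc add.left_commute)
        then have "midpoint (e + ep *\<^sub>R d) (e + (-ep) *\<^sub>R d) = e"
          unfolding midpoint_def by simp
        then have "e \<in> open_segment (e + ep *\<^sub>R d) (e + (-ep) *\<^sub>R d)"
          using midpoint_in_open_segment ne by metis
        then show False using ext a b unfolding extreme_point_of_def by blast
      qed
      then have "w = (c \<bullet> w) *\<^sub>R e" unfolding d_def by simp
      then show "w \<in> span {e}" unfolding span_singleton by auto
    qed
    have "span {e} \<subseteq> W" using eW sW by (simp add: span_minimal)
    then have Weq: "W = span {e}" using Wsp by auto
    then have dW1: "dim W = 1" using dim_span1[OF enz] by simp
    have WU: "W \<in> UU H BA" by (rule Vchar[OF st _ W_def dW1]) (auto simp: T_def)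
    have bW: "bv W \<noteq> 0" "W = span {bv W}" using bv[OF sW dW1] by auto
    then obtain k where k: "e = k *\<^sub>R bv W" using eW unfolding span_singleton by auto
    have k0: "k \<noteq> 0" using k enz by auto
    define u where "u = (if k > 0 then bv W else - bv W)"
    define l where "l = \<bar>k\<bar>"
    have eu: "e = l *\<^sub>R u" unfolding u_def l_def using k by auto
    have l0: "l > 0" unfolding l_def using k0 by simp
    have uR: "u \<in> Rays H BA" unfolding u_def Rays_def using WU by auto
    have "u = (1 / l) *\<^sub>R e" using eu l0 by simp
    then have "u \<in> cone H BA \<sigma>" using cone_scale[OF st ec(1)] l0 by simp
    then show ?thesis using uR l0 eu by blast
  qed
  obtain e1 e2 e3 where es: "e1 \<in> E" "e2 \<in> E" "e3 \<in> E" "e1 \<noteq> e2" "e1 \<noteq> e3" "e2 \<noteq> e3"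
    using three by blast
  have ceE: "c \<bullet> e = 1" if "e \<in> E" for e using that unfolding E_def K_def extreme_point_of_def by auto
  obtain u1 l1 where r1: "u1 \<in> Rays H BA" "u1 \<in> cone H BA \<sigma>" "l1 > 0" "e1 = l1 *\<^sub>R u1" using ray[OF es(1)] by blast
  obtain u2 l2 where r2: "u2 \<in> Rays H BA" "u2 \<in> cone H BA \<sigma>" "l2 > 0" "e2 = l2 *\<^sub>R u2" using ray[OF es(2)] by blast
  obtain u3 l3 where r3: "u3 \<in> Rays H BA" "u3 \<in> cone H BA \<sigma>" "l3 > 0" "e3 = l3 *\<^sub>R u3" using ray[OF es(3)] by blast
  have dist: "u \<noteq> u'" if "e \<in> E" "e' \<in> E" "e \<noteq> e'" "e = l *\<^sub>R u" "e' = l' *\<^sub>R u'" for e e' u u' l l'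
  proof
    assume "u = u'"
    have "l * (c \<bullet> u) = 1" "l' * (c \<bullet> u) = 1" using ceE[OF that(1)] ceE[OF that(2)] that(4,5) \<open>u = u'\<close> by auto
    then have "l = l'" by (metis mult_cancel_right mult_eq_0_iff zero_neq_one)
    then show False using that \<open>u = u'\<close> by simp
  qed
  have "u1 \<noteq> u2" "u1 \<noteq> u3" "u2 \<noteq> u3"
    using dist[OF es(1) es(2) es(4) r1(4) r2(4)] dist[OF es(1) es(3) es(5) r1(4) r3(4)] dist[OF es(2) es(3) es(6) r2(4) r3(4)]
    by auto
  then have c3: "card {u1, u2, u3} = 3" by simp
  have fR: "finite (Rays H BA)" unfolding Rays_def using finite_UU[OF hBA] by simp
  have "{u1, u2, u3} \<subseteq> {u \<in> Rays H BA. u \<in> cone H BA \<sigma>}" using r1 r2 r3 by auto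
  then have "card {u1, u2, u3} \<le> card {u \<in> Rays H BA. u \<in> cone H BA \<sigma>}"
    by (rule card_mono[rotated]) (use fR in auto)
  then show ?thesis using c3 by simp
qed

lemma card_filter_sum: "finite B \<Longrightarrow> card {b\<in>B. P b} = (\<Sum>b\<in>B. if P b then 1 else (0::nat))"
  by (simp add: sum.If_cases Int_def)

lemma sum_card_swap:
  assumes "finite A" "finite B"
  shows "(\<Sum>a\<in>A. card {b\<in>B. P a b}) = (\<Sum>b\<in>B. card {a\<in>A. P a b})"
proof -
  have "(\<Sum>a\<in>A. card {b\<in>B. P a b}) = (\<Sum>a\<in>A. \<Sum>b\<in>B. if P a b then 1 else (0::nat))"
    using assms by (simp add: card_filter_sum)
  also have "\<dots> = (\<Sum>b\<in>B. \<Sum>a\<in>A. if P a b then 1 else (0::nat))" by (rule sum.swap)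
  also have "\<dots> = (\<Sum>b\<in>B. card {a\<in>A. P a b})" using assms by (simp add: card_filter_sum)
  finally show ?thesis .
qed

lemma rr_ge2:
  assumes st: "setting H BA" and v: "v \<in> UU H BA"
  shows "rr H BA v \<ge> 2"
proof -
  obtain X Y where XY: "X \<in> LL H BA" "Y \<in> LL H BA" "X \<noteq> Y" "v = X \<inter> Y" using v unfolding UU_def by auto
  have "{X, Y} \<subseteq> {Z \<in> LL H BA. v \<subseteq> Z}" using XY by auto
  then have "card {X, Y} \<le> card {Z \<in> LL H BA. v \<subseteq> Z}"
    by (rule card_mono[rotated]) (use finite_LL st setting_def in auto)
  then show ?thesis unfolding rr_def using XY(3) by simp
qed

lemma rr_ray:
  assumes st: "setting H BA" and v: "v \<in> UU H BA" and u: "u = bv v \<or> u = - bv v"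
  shows "card (LL H {H' \<in> BA. u \<in> H'}) = rr H BA v"
proof -
  have vp: "subspace v" "dim v = 1" "v \<subseteq> H" using UU_props[OF st v] by auto
  have b: "bv v \<noteq> 0" "v = span {bv v}" using bv[OF vp(1,2)] by auto
  have u0: "u \<noteq> 0" using u b(1) by auto
  have uv: "u \<in> v" using u b(2) vp(1) by (metis span_base singletonI subspace_neg)
  have vsp: "v = span {u}" using dim_le1_span[OF vp(1) _ uv u0] vp(2) by simp
  have hBA: "\<And>H'. H' \<in> BA \<Longrightarrow> lin_hyperplane H'" using st unfolding setting_def hyps_def by auto
  have eqv: "v \<subseteq> H \<inter> H' \<longleftrightarrow> u \<in> H'" if "H' \<in> BA" for H'
  proof
    assume "v \<subseteq> H \<inter> H'" then show "u \<in> H'" using uv by auto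
  next
    assume "u \<in> H'"
    then have "span {u} \<subseteq> H'" using hyp_subspace[OF hBA[OF that]] by (simp add: span_minimal)
    then show "v \<subseteq> H \<inter> H'" using vsp vp(3) by auto
  qed
  have "LL H {H' \<in> BA. u \<in> H'} = {X \<in> LL H BA. v \<subseteq> X}"
    unfolding LL_def using eqv by auto
  then show ?thesis unfolding rr_def by simp
qed

lemma melchior:
  assumes st: "setting H BA" and int0: "\<forall>x. x \<in> H \<and> (\<forall>H'\<in>BA. x \<in> H') \<longrightarrow> x = 0"
  shows "3 + (\<Sum>v\<in>UU H BA. rr H BA v) \<le> 3 * card (UU H BA)"
proof -
  have hBA: "hyps BA" and hH: "lin_hyperplane H" using st setting_def by auto
  have fBA: "finite BA" using hBA hyps_def by auto
  have BAne: "BA \<noteq> {}"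
  proof
    assume "BA = {}"
    obtain y where y: "y \<in> H" "y \<noteq> 0" using dim_ge1_ex[of H] hyp_dim[OF hH] by auto
    have "y \<in> H \<and> (\<forall>H'\<in>BA. y \<in> H')" using y \<open>BA = {}\<close> by simp
    then have "y = 0" using int0 by blast
    then show False using y by simp
  qed
  let ?R = "reg H BA" and ?U = "UU H BA"
  have fR: "finite ?R" using finite_reg fBA by auto
  have fU: "finite ?U" using finite_UU[OF hBA] .
  have fRays: "finite (Rays H BA)" unfolding Rays_def using fU by simp
  define S1 where "S1 = (\<Sum>v\<in>?U. rr H BA v - 1)"
  define Sr where "Sr = (\<Sum>v\<in>?U. rr H BA v)"
  have lower: "card ?R \<ge> 2 + 2 * S1" unfolding S1_def by (rule L3D[OF st order_refl BAne])
  have S1r: "S1 + card ?U = Sr"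
  proof -
    have "(\<Sum>v\<in>?U. (rr H BA v - 1) + 1) = S1 + (\<Sum>v\<in>?U. 1)" unfolding S1_def by (rule sum.distrib)
    then have "S1 + card ?U = (\<Sum>v\<in>?U. (rr H BA v - 1) + 1)" by simp
    also have "\<dots> = Sr" unfolding Sr_def
    proof (rule sum.cong)
      fix v assume "v \<in> ?U"
      then have "rr H BA v \<ge> 2" by (rule rr_ge2[OF st])
      then show "rr H BA v - 1 + 1 = rr H BA v" by simp
    qed simp
    finally show ?thesis .
  qed
  define g where "g = (\<lambda>u. 2 * card (LL H {H' \<in> BA. u \<in> H'}))"
  have "3 * card ?R = (\<Sum>\<sigma>\<in>?R. 3)" by simp
  also have "\<dots> \<le> (\<Sum>\<sigma>\<in>?R. card {u \<in> Rays H BA. u \<in> cone H BA \<sigma>})"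
    by (rule sum_mono) (rule corner3[OF st int0])
  also have "\<dots> = (\<Sum>u\<in>Rays H BA. card {\<sigma> \<in> ?R. u \<in> cone H BA \<sigma>})"
    by (rule sum_card_swap[OF fR fRays])
  also have "\<dots> \<le> (\<Sum>u\<in>Rays H BA. g u)"
    unfolding g_def by (rule sum_mono) (rule b2[OF st])
  also have "\<dots> \<le> (\<Sum>u\<in>bv ` ?U. g u) + (\<Sum>u\<in>(\<lambda>v. - bv v) ` ?U. g u)"
    unfolding Rays_def using fU by (simp add: sum_Un_nat)
  also have "\<dots> \<le> (\<Sum>v\<in>?U. g (bv v)) + (\<Sum>v\<in>?U. g (- bv v))"
    using sum_image_le[OF fU, of g bv] sum_image_le[OF fU, of g "\<lambda>v. - bv v"]
    by (simp add: o_def)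
  also have "\<dots> = (\<Sum>v\<in>?U. 2 * rr H BA v) + (\<Sum>v\<in>?U. 2 * rr H BA v)"
    unfolding g_def using rr_ray[OF st] by simp
  also have "\<dots> = 4 * Sr" unfolding Sr_def by (simp add: sum_distrib_left[symmetric])
  finally have upper: "3 * card ?R \<le> 4 * Sr" .
  show ?thesis using lower upper S1r unfolding Sr_def[symmetric] by linarith
qed

lemma arr_props:
  assumes "arrangement A"
  shows "finite A" "A \<noteq> {}" "\<And>H. H \<in> A \<Longrightarrow> lin_hyperplane H" "\<Inter>A = {0}"
  using assms unfolding arrangement_def by auto

lemma arr_setting:
  assumes "arrangement A" "H \<in> A"
  shows "setting H (A - {H})"
  using arr_props[OF assms(1)] assms(2) unfolding setting_def hyps_def by auto

lemma arr_int0: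
  assumes "arrangement A" "H \<in> A"
  shows "\<forall>x. x \<in> H \<and> (\<forall>H'\<in>A - {H}. x \<in> H') \<longrightarrow> x = 0"
proof (intro allI impI)
  fix x assume "x \<in> H \<and> (\<forall>H'\<in>A - {H}. x \<in> H')"
  then have "x \<in> \<Inter>A" using assms(2) by blast
  then show "x = 0" using arr_props(4)[OF assms(1)] by simp
qed

lemma flat_subspace:
  assumes "arrangement A" "X \<in> flats A"
  shows "subspace X"
proof -
  obtain B where B: "B \<subseteq> A" "B \<noteq> {}" "X = \<Inter>B" using assms(2) unfolding flats_def by auto
  then show ?thesis using arr_props(3)[OF assms(1)] hyp_subspace by (auto intro!: subspace_Inter)
qed

lemma finite_flats: "finite A \<Longrightarrow> finite (flats A)"
proof -
  assume "finite A"
  have "flats A \<subseteq> Inter ` Pow A" unfolding flats_def by auto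
  then show ?thesis using \<open>finite A\<close> by (meson finite_Pow_iff finite_imageI finite_subset)
qed

lemma finite_lines: "finite A \<Longrightarrow> finite (lines A)"
  unfolding lines_def using finite_flats by simp

lemma finite_vertices: "finite A \<Longrightarrow> finite (vertices A)"
  unfolding vertices_def using finite_flats by simp

lemma LL_lines:
  assumes arr: "arrangement A" and H: "H \<in> A"
  shows "LL H (A - {H}) = {X \<in> lines A. X \<subseteq> H}"
proof
  have st: "setting H (A - {H})" by (rule arr_setting[OF arr H])
  show "LL H (A - {H}) \<subseteq> {X \<in> lines A. X \<subseteq> H}"
  proof
    fix X assume X: "X \<in> LL H (A - {H})"
    then obtain H' where H': "H' \<in> A" "H' \<noteq> H" "X = H \<inter> H'" unfolding LL_def by auto
    have "X = \<Inter>{H, H'}" using H' by auto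
    then have "X \<in> flats A" unfolding flats_def using H H' by blast
    then show "X \<in> {X \<in> lines A. X \<subseteq> H}" using LL_dim[OF st X] unfolding lines_def by auto
  qed
  show "{X \<in> lines A. X \<subseteq> H} \<subseteq> LL H (A - {H})"
  proof
    fix X assume X: "X \<in> {X \<in> lines A. X \<subseteq> H}"
    then obtain B where B: "B \<subseteq> A" "B \<noteq> {}" "X = \<Inter>B" "dim X = 2" "X \<subseteq> H"
      unfolding lines_def flats_def by auto
    have sX: "subspace X" using flat_subspace[OF arr] X unfolding lines_def by auto
    have "\<exists>H'\<in>B. H' \<noteq> H"
    proof (rule ccontr)
      assume "\<not> ?thesis"
      then have "B = {H}" using B(2) by auto
      then have "X = H" using B(3) by simp
      then show False using B(4) hyp_dim arr_props(3)[OF arr H] by simp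
    qed
    then obtain H' where H': "H' \<in> B" "H' \<noteq> H" by auto
    have "X \<subseteq> H \<inter> H'" using B H' by auto
    moreover have HH': "H \<inter> H' \<in> LL H (A - {H})" using H' B(1) unfolding LL_def by auto
    ultimately have "X = H \<inter> H'"
      using subspace_dim_equal[OF sX] LL_dim[OF st HH'] B(4) by simp
    then show "X \<in> LL H (A - {H})" using HH' by simp
  qed
qed

lemma UU_vertices:
  assumes arr: "arrangement A" and H: "H \<in> A"
  shows "UU H (A - {H}) = {v \<in> vertices A. v \<subseteq> H}"
proof
  have st: "setting H (A - {H})" by (rule arr_setting[OF arr H])
  show "UU H (A - {H}) \<subseteq> {v \<in> vertices A. v \<subseteq> H}"
  proof
    fix v assume v: "v \<in> UU H (A - {H})"
    obtain X Y where XY: "X \<in> LL H (A - {H})" "Y \<in> LL H (A - {H})" "v = X \<inter> Y" using v unfolding UU_def by auto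
    obtain H1 where H1: "H1 \<in> A" "X = H \<inter> H1" using XY(1) unfolding LL_def by auto
    obtain H2 where H2: "H2 \<in> A" "Y = H \<inter> H2" using XY(2) unfolding LL_def by auto
    have "v = \<Inter>{H, H1, H2}" using XY H1 H2 by auto
    then have "v \<in> flats A" unfolding flats_def using H H1 H2 by blast
    then show "v \<in> {v \<in> vertices A. v \<subseteq> H}" using UU_props[OF st v] unfolding vertices_def by auto
  qed
  show "{v \<in> vertices A. v \<subseteq> H} \<subseteq> UU H (A - {H})"
  proof
    fix v assume v: "v \<in> {v \<in> vertices A. v \<subseteq> H}"
    then obtain B where B: "B \<subseteq> A" "B \<noteq> {}" "v = \<Inter>B" "dim v = 1" "v \<subseteq> H"
      unfolding vertices_def flats_def by auto
    have vd: "v = H \<inter> \<Inter>(B - {H})" using B by auto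
    have "B - {H} \<subseteq> A - {H}" using B by auto
    then show "v \<in> UU H (A - {H})" using Vchar[OF st _ vd B(4)] by simp
  qed
qed

lemma vertex_in_hyp:
  assumes "v \<in> vertices A"
  obtains H where "H \<in> A" "v \<subseteq> H"
  using assms unfolding vertices_def flats_def by auto

lemma weight_vertex:
  assumes arr: "arrangement A" and v: "v \<in> vertices A"
  shows "weight A v \<ge> 3" "weight A v \<le> m_max A"
proof -
  obtain H where H: "H \<in> A" "v \<subseteq> H" using vertex_in_hyp[OF v] by blast
  have "v \<in> UU H (A - {H})" using UU_vertices[OF arr H(1)] v H(2) by auto
  then obtain X Y where XY: "X \<in> LL H (A - {H})" "Y \<in> LL H (A - {H})" "X \<noteq> Y" "v = X \<inter> Y"
    unfolding UU_def by auto
  obtain H1 where H1: "H1 \<in> A - {H}" "X = H \<inter> H1" using XY(1) unfolding LL_def by auto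
  obtain H2 where H2: "H2 \<in> A - {H}" "Y = H \<inter> H2" using XY(2) unfolding LL_def by auto
  have "H1 \<noteq> H2" using XY(3) H1 H2 by blast
  moreover have "H1 \<noteq> H" "H2 \<noteq> H" using H1 H2 by auto
  ultimately have c3: "card {H, H1, H2} = 3" by simp
  have "{H, H1, H2} \<subseteq> {H' \<in> A. v \<subseteq> H'}" using H H1 H2 XY(4) by auto
  then have "card {H, H1, H2} \<le> weight A v" unfolding weight_def
    by (rule card_mono[rotated]) (use arr_props(1)[OF arr] in auto)
  then show "weight A v \<ge> 3" using c3 by simp
  have fV: "finite (vertices A)" using finite_vertices arr_props(1)[OF arr] by auto
  have "t_num A (weight A v) > 0" unfolding t_num_def using v fV
    by (subst card_gt_0_iff) auto
  moreover have "finite {j. 3 \<le> j \<and> t_num A j > 0}"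
  proof -
    have "{j. 3 \<le> j \<and> t_num A j > 0} \<subseteq> {..card A}"
    proof
      fix j assume "j \<in> {j. 3 \<le> j \<and> t_num A j > 0}"
      then have "{X \<in> vertices A. weight A X = j} \<noteq> {}" unfolding t_num_def by (intro notI) simp
      then obtain w where "weight A w = j" by auto
      moreover have "weight A w \<le> card A" unfolding weight_def
        by (rule card_mono) (use arr_props(1)[OF arr] in auto)
      ultimately show "j \<in> {..card A}" by simp
    qed
    then show ?thesis by (rule finite_subset) simp
  qed
  ultimately show "weight A v \<le> m_max A" unfolding m_max_def
    using \<open>weight A v \<ge> 3\<close> by (intro Max_ge) auto
qed

lemma line_props:
  assumes arr: "arrangement A" and X: "X \<in> lines A"
  shows "weight A X \<ge> 2" "weight A X + 1 \<le> m_max A"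
    "real (card A) - real (weight A X) \<le> real (card {v \<in> vertices A. v \<subseteq> X}) * (real (m_max A) - real (weight A X))"
proof -
  have fA: "finite A" using arr_props(1)[OF arr] .
  obtain B where B: "B \<subseteq> A" "B \<noteq> {}" "X = \<Inter>B" "dim X = 2" using X unfolding lines_def flats_def by auto
  have sX: "subspace X" using flat_subspace[OF arr] X unfolding lines_def by auto
  obtain H where H: "H \<in> A" "X \<subseteq> H" using B by auto
  have "X \<in> LL H (A - {H})" using LL_lines[OF arr H(1)] X H(2) by auto
  then obtain H1 where H1: "H1 \<in> A - {H}" "X = H \<inter> H1" unfolding LL_def by auto
  have "H1 \<noteq> H" using H1 by auto
  then have c2: "card {H, H1} = 2" by simp
  have "{H, H1} \<subseteq> {H' \<in> A. X \<subseteq> H'}" using H H1 by auto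
  then have "card {H, H1} \<le> weight A X" unfolding weight_def
    by (rule card_mono[rotated]) (use fA in auto)
  then show "weight A X \<ge> 2" using c2 by simp
  define D where "D = {H'' \<in> A. \<not> X \<subseteq> H''}"
  define VX where "VX = {v \<in> vertices A. v \<subseteq> X}"
  have cut: "X \<inter> H'' \<in> VX" if "H'' \<in> D" for H''
  proof -
    have hH: "lin_hyperplane H''" using that arr_props(3)[OF arr] D_def by auto
    have ns: "\<not> X \<subseteq> H''" using that D_def by auto
    have "X \<inter> H'' = \<Inter>(insert H'' B)" using B(3) by auto
    then have "X \<inter> H'' \<in> flats A" unfolding flats_def using B that D_def by blast
    moreover have "dim (X \<inter> H'') < 2" using subspace_not_sub_dim[OF sX hyp_subspace[OF hH] ns] B(4) by simp
    moreover have "dim X + dim H'' \<le> dim (X \<inter> H'') + 4" by (rule dim_int_ge[OF sX hyp_subspace[OF hH]])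
    ultimately show ?thesis unfolding VX_def vertices_def using B(4) hyp_dim[OF hH] by auto
  qed
  have wX: "weight A X + card D = card A"
  proof -
    have "{H' \<in> A. X \<subseteq> H'} \<union> D = A" "{H' \<in> A. X \<subseteq> H'} \<inter> D = {}" unfolding D_def by auto
    then show ?thesis unfolding weight_def using fA
      by (metis (no_types, lifting) card_Un_disjoint finite_Un)
  qed
  have "D \<noteq> {}"
  proof
    assume "D = {}"
    then have "X \<subseteq> \<Inter>A" unfolding D_def by auto
    then have "X \<subseteq> {0}" using arr_props(4)[OF arr] by simp
    then have "dim X = 0" by simp
    then show False using B(4) by simp
  qed
  then obtain H'' where H'': "H'' \<in> D" by auto
  have vv: "X \<inter> H'' \<in> vertices A" using cut[OF H''] VX_def by auto
  have "insert H'' {H' \<in> A. X \<subseteq> H'} \<subseteq> {H' \<in> A. X \<inter> H'' \<subseteq> H'}" using H'' D_def by auto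
  then have "card (insert H'' {H' \<in> A. X \<subseteq> H'}) \<le> weight A (X \<inter> H'')" unfolding weight_def
    by (rule card_mono[rotated]) (use fA in auto)
  moreover have "card (insert H'' {H' \<in> A. X \<subseteq> H'}) = weight A X + 1"
    unfolding weight_def using H'' D_def fA by simp
  ultimately show "weight A X + 1 \<le> m_max A" using weight_vertex(2)[OF arr vv] by simp
  have fV: "finite VX" using finite_vertices[OF fA] unfolding VX_def by simp
  have fD: "finite D" using fA D_def by simp
  have img: "(\<lambda>H'. X \<inter> H') ` D \<subseteq> VX" using cut by auto
  have fib: "card {H' \<in> D. X \<inter> H' = v} \<le> m_max A - weight A X" if "v \<in> VX" for v
  proof -
    have vX: "v \<subseteq> X" and vV: "v \<in> vertices A" using that VX_def by auto
    have "{H' \<in> D. X \<inter> H' = v} \<subseteq> {H' \<in> A. v \<subseteq> H'} - {H' \<in> A. X \<subseteq> H'}" unfolding D_def by auto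
    then have "card {H' \<in> D. X \<inter> H' = v} \<le> card ({H' \<in> A. v \<subseteq> H'} - {H' \<in> A. X \<subseteq> H'})"
      by (rule card_mono[rotated]) (use fA in auto)
    also have "\<dots> = weight A v - weight A X" unfolding weight_def
      by (rule card_Diff_subset) (use fA vX in auto)
    also have "\<dots> \<le> m_max A - weight A X" using weight_vertex(2)[OF arr vV] by simp
    finally show ?thesis .
  qed
  have "card D = (\<Sum>v\<in>VX. card {H' \<in> D. X \<inter> H' = v})" by (rule card_fibers[OF fD fV img])
  also have "\<dots> \<le> (\<Sum>v\<in>VX. m_max A - weight A X)" by (rule sum_mono) (rule fib)
  also have "\<dots> = card VX * (m_max A - weight A X)" by simp
  finally have "card D \<le> card VX * (m_max A - weight A X)" .
  then have "real (card D) \<le> real (card VX) * real (m_max A - weight A X)"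
    by (metis of_nat_le_iff of_nat_mult)
  moreover have "real (m_max A - weight A X) = real (m_max A) - real (weight A X)"
    using \<open>weight A X + 1 \<le> m_max A\<close> by simp
  moreover have "real (card D) = real (card A) - real (weight A X)" using wX by (simp add: algebra_simps flip: of_nat_add)
  ultimately show "real (card A) - real (weight A X) \<le> real (card {v \<in> vertices A. v \<subseteq> X}) * (real (m_max A) - real (weight A X))"
    unfolding VX_def by simp
qed

lemma group_count:
  fixes w :: "'a \<Rightarrow> nat" and c :: "nat \<Rightarrow> real"
  assumes "finite S" "w ` S \<subseteq> T" "finite T"
  shows "(\<Sum>i\<in>T. c i * real (card {x \<in> S. w x = i})) = (\<Sum>x\<in>S. c (w x))"
proof -
  have "(\<Sum>i\<in>T. c i * real (card {x \<in> S. w x = i})) = (\<Sum>i\<in>T. \<Sum>x\<in>{x \<in> S. w x = i}. c (w x))"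
    by (rule sum.cong) auto
  also have "\<dots> = (\<Sum>x\<in>S. c (w x))" by (rule sum.group[OF assms(1,3,2)])
  finally show ?thesis .
qed

theorem corollary3:
  fixes A :: "(real^4) set set" and n m :: nat
  assumes "simplicial A"
    and "n = card A"
    and "m = m_max A"
  shows "(\<Sum>i=3..m. real i * real (t_num A i))
     \<ge> real n + (\<Sum>i=2..m-1. (real i * (real n - real i)) / (3 * (real m - real i)) * real (h_num A i))"
proof -
  have arr: "arrangement A" using assms(1) simplicial_def by auto
  have fA: "finite A" using arr_props(1)[OF arr] .
  define V where "V = vertices A"
  define L where "L = lines A"
  define w where "w = weight A"
  have fV: "finite V" unfolding V_def using finite_vertices[OF fA] .
  have fL: "finite L" unfolding L_def using finite_lines[OF fA] .
  define f where "f = (\<lambda>X. (real n - real (w X)) / (real m - real (w X)))"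
  have lhs: "(\<Sum>i=3..m. real i * real (t_num A i)) = (\<Sum>v\<in>V. real (w v))"
  proof -
    have "w ` V \<subseteq> {3..m}" using weight_vertex[OF arr] assms(3) unfolding V_def w_def by auto
    then have "(\<Sum>i=3..m. real i * real (card {v \<in> V. w v = i})) = (\<Sum>v\<in>V. real (w v))"
      using group_count[OF fV, of w "{3..m}" real] by simp
    then show ?thesis unfolding t_num_def V_def w_def by simp
  qed
  have swapV: "(\<Sum>v\<in>V. w v) = (\<Sum>H\<in>A. card {v \<in> V. v \<subseteq> H})"
    unfolding w_def weight_def using sum_card_swap[OF fV fA, of "\<lambda>v H. v \<subseteq> H"] by simp
  have rhs: "(\<Sum>i=2..m-1. (real i * (real n - real i)) / (3 * (real m - real i)) * real (h_num A i))
      = (\<Sum>X\<in>L. (real (w X) * (real n - real (w X))) / (3 * (real m - real (w X))))"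
  proof -
    have "w ` L \<subseteq> {2..m-1}" using line_props(1,2)[OF arr] assms(3) unfolding L_def w_def by fastforce
    then have "(\<Sum>i=2..m-1. (real i * (real n - real i)) / (3 * (real m - real i)) * real (card {X \<in> L. w X = i}))
      = (\<Sum>X\<in>L. (real (w X) * (real n - real (w X))) / (3 * (real m - real (w X))))"
      using group_count[OF fL, of w "{2..m-1}" "\<lambda>i. (real i * (real n - real i)) / (3 * (real m - real i))"] by simp
    then show ?thesis unfolding h_num_def L_def w_def by simp
  qed
  have perH: "real (card {v \<in> V. v \<subseteq> H}) \<ge> 1 + (\<Sum>X\<in>{X \<in> L. X \<subseteq> H}. f X) / 3" if H: "H \<in> A" for H
  proof -
    have st: "setting H (A - {H})" by (rule arr_setting[OF arr H])
    have mel: "3 + (\<Sum>v\<in>UU H (A - {H}). rr H (A - {H}) v) \<le> 3 * card (UU H (A - {H}))"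
      by (rule melchior[OF st arr_int0[OF arr H]])
    have UUe: "UU H (A - {H}) = {v \<in> V. v \<subseteq> H}" using UU_vertices[OF arr H] V_def by simp
    have LLe: "LL H (A - {H}) = {X \<in> L. X \<subseteq> H}" using LL_lines[OF arr H] L_def by simp
    have fU: "finite {v \<in> V. v \<subseteq> H}" using fV by simp
    have fLH: "finite {X \<in> L. X \<subseteq> H}" using fL by simp
    have "(\<Sum>v\<in>UU H (A - {H}). rr H (A - {H}) v) = (\<Sum>v\<in>{v \<in> V. v \<subseteq> H}. card {X \<in> {X \<in> L. X \<subseteq> H}. v \<subseteq> X})"
      unfolding rr_def UUe LLe by simp
    also have "\<dots> = (\<Sum>X\<in>{X \<in> L. X \<subseteq> H}. card {v \<in> {v \<in> V. v \<subseteq> H}. v \<subseteq> X})"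
      by (rule sum_card_swap[OF fU fLH])
    also have "\<dots> = (\<Sum>X\<in>{X \<in> L. X \<subseteq> H}. card {v \<in> V. v \<subseteq> X})"
    proof (rule sum.cong)
      fix X assume "X \<in> {X \<in> L. X \<subseteq> H}"
      then have "{v \<in> {v \<in> V. v \<subseteq> H}. v \<subseteq> X} = {v \<in> V. v \<subseteq> X}" by blast
      then show "card {v \<in> {v \<in> V. v \<subseteq> H}. v \<subseteq> X} = card {v \<in> V. v \<subseteq> X}" by simp
    qed simp
    finally have eq: "(\<Sum>v\<in>UU H (A - {H}). rr H (A - {H}) v) = (\<Sum>X\<in>{X \<in> L. X \<subseteq> H}. card {v \<in> V. v \<subseteq> X})" .
    have fle: "f X \<le> real (card {v \<in> V. v \<subseteq> X})" if "X \<in> L" for X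
    proof -
      have p: "w X + 1 \<le> m" "real n - real (w X) \<le> real (card {v \<in> V. v \<subseteq> X}) * (real m - real (w X))"
        using line_props(2,3)[OF arr] that assms(2,3) unfolding L_def V_def w_def by auto
      then have "real m - real (w X) > 0" by simp
      then show ?thesis unfolding f_def using p(2) by (simp add: divide_le_eq)
    qed
    have "(\<Sum>X\<in>{X \<in> L. X \<subseteq> H}. f X) \<le> (\<Sum>X\<in>{X \<in> L. X \<subseteq> H}. real (card {v \<in> V. v \<subseteq> X}))"
      by (rule sum_mono) (use fle in auto)
    also have "\<dots> = real (\<Sum>X\<in>{X \<in> L. X \<subseteq> H}. card {v \<in> V. v \<subseteq> X})" by simp
    also have "\<dots> = real (\<Sum>v\<in>UU H (A - {H}). rr H (A - {H}) v)" using eq by simp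
    also have "\<dots> \<le> 3 * real (card (UU H (A - {H}))) - 3"
    proof -
      have "real (3 + (\<Sum>v\<in>UU H (A - {H}). rr H (A - {H}) v)) \<le> real (3 * card (UU H (A - {H})))"
        using mel by (simp only: of_nat_le_iff)
      then show ?thesis by simp
    qed
    finally show ?thesis unfolding UUe by simp
  qed
  have "(\<Sum>v\<in>V. real (w v)) = (\<Sum>H\<in>A. real (card {v \<in> V. v \<subseteq> H}))"
    using arg_cong[OF swapV, of real] by simp
  also have "\<dots> \<ge> (\<Sum>H\<in>A. 1 + (\<Sum>X\<in>{X \<in> L. X \<subseteq> H}. f X) / 3)"
    by (rule sum_mono) (rule perH)
  finally have step1: "(\<Sum>v\<in>V. real (w v)) \<ge> (\<Sum>H\<in>A. 1 + (\<Sum>X\<in>{X \<in> L. X \<subseteq> H}. f X) / 3)" .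
  have "(\<Sum>H\<in>A. 1 + (\<Sum>X\<in>{X \<in> L. X \<subseteq> H}. f X) / 3) = real n + (\<Sum>H\<in>A. \<Sum>X\<in>{X \<in> L. X \<subseteq> H}. f X) / 3"
    using assms(2) by (simp add: sum.distrib sum_divide_distrib)
  also have "(\<Sum>H\<in>A. \<Sum>X\<in>{X \<in> L. X \<subseteq> H}. f X) = (\<Sum>X\<in>L. \<Sum>H\<in>{H \<in> A. X \<subseteq> H}. f X)"
    by (rule sum.swap_restrict[OF fA fL])
  also have "\<dots> = (\<Sum>X\<in>L. real (w X) * f X)"
    unfolding w_def weight_def by simp
  finally have step2: "(\<Sum>H\<in>A. 1 + (\<Sum>X\<in>{X \<in> L. X \<subseteq> H}. f X) / 3) = real n + (\<Sum>X\<in>L. real (w X) * f X) / 3" .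
  have step3: "(\<Sum>X\<in>L. real (w X) * f X) / 3 = (\<Sum>X\<in>L. (real (w X) * (real n - real (w X))) / (3 * (real m - real (w X))))"
    unfolding f_def sum_divide_distrib by (rule sum.cong) auto
  show ?thesis unfolding lhs rhs using step1 step2 step3 by simp
qed

end
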